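(* The function $\zeta(0,s)$ is analytic on $\mathbb{C}$ except at $s=2,1$, and has a pole at $s=2$ with residue $1$ and a pole at $s=1$ with residue $2\zeta(0)$. The function $\zeta(-1,s+1)$ is analytic except at $s=2,1$, and has a pole at $s=2$ with residue $1/2$ and a pole at $s=1$ with residue $\zeta(0)$. For an integer $n\ge2$, the function $\zeta(-n,s+n)$ is analytic except at $s=2,1,0,-2,-4,\dots,-2\lfloor n/2\rfloor+2$, and has poles: at $s=2$ with residue $\frac{1}{n+1}$; at $s=1$ with residue $\zeta(0)=-\frac12$; and at $s=-2k$ with residue $\binom{2k-n}{2k+1}\zeta(-2k-1)$, for $k=0,1,\dots,\lfloor n/2\rfloor-1$.
   Context: $\zeta(\cdot)$ of one variable is the Riemann zeta function. For an integer $n\ge 0$, $\zeta(-n,s+n)$ denotes the Euler–Zagier double zeta function $\zeta(s_1,s_2)=\sum_{1\le n_1<n_2} n_1^{-s_1}n_2^{-s_2}$ evaluated at $(s_1,s_2)=(-n,s+n)$; i.e. it is the meromorphic continuation to all $s\in\mathbb{C}$ of the series $\sum_{m,j\ge1} m^{n}(m+j)^{-s-n}$, which converges absolutely for $\Re(s)>2$. For an integer $a$ and non-negative integer $b$, $\binom{a}{b}=a(a-1)\cdots(a-b+1)/b!$. *)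

theory Defs
  imports "HOL-Complex_Analysis.Complex_Analysis"
begin

text \<open>Riemann zeta function: the (unique, by the identity theorem) holomorphic function
  on the complex plane minus 1 that agrees with the Dirichlet series for Re s > 1.\<close>
definition riemann_zeta :: "complex \<Rightarrow> complex" where
  "riemann_zeta = (SOME f. f holomorphic_on (UNIV - {1}) \<and>
      (\<forall>s. 1 < Re s \<longrightarrow> f s = (\<Sum>k. 1 / (of_nat (Suc k)) powr s)))"

text \<open>The series defining zeta(-n, s+n): sum over m, j >= 1 of m^n (m+j)^(-s-n),
  absolutely convergent for Re s > 2.\<close>
definition dz_series :: "nat \<Rightarrow> complex \<Rightarrow> complex" where
  "dz_series n s = (\<Sum>\<^sub>\<infinity>(m, j) \<in> {1::nat..} \<times> {1::nat..}.
      (of_nat m) ^ n * (of_nat (m + j)) powr (- (s + of_nat n)))"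

end

theory Submission
  imports Defs
begin

lemma holo_suminf:
  fixes f :: "nat \<Rightarrow> complex \<Rightarrow> complex"
  assumes S: "open S" and hol: "\<And>n. f n holomorphic_on S"
  and bnd: "\<And>x. x \<in> S \<Longrightarrow> \<exists>d>0. cball x d \<subseteq> S \<and>
      (\<exists>M N. summable M \<and> (\<forall>n\<ge>N. \<forall>y\<in>cball x d. norm (f n y) \<le> M n))"
  shows "(\<lambda>s. \<Sum>n. f n s) holomorphic_on S"
proof (rule holomorphic_uniform_sequence[OF S, where f = "\<lambda>n s. \<Sum>i<n. f i s"])
  show "(\<lambda>s. \<Sum>i<n. f i s) holomorphic_on S" for n
    by (rule holomorphic_on_sum, rule hol)
next
  fix x assume x: "x \<in> S"
  obtain d where d: "d > 0" "cball x d \<subseteq> S"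
    and ex: "\<exists>M N. summable M \<and> (\<forall>n\<ge>N. \<forall>y\<in>cball x d. norm (f n y) \<le> M n)"
    using bnd[OF x] by metis
  from ex obtain M N where M: "summable M" and MN: "\<forall>n\<ge>N. \<forall>y\<in>cball x d. norm (f n y) \<le> M n"
    by metis
  have ev: "eventually (\<lambda>n. \<forall>y\<in>cball x d. norm (f n y) \<le> M n) sequentially"
    unfolding eventually_sequentially using MN by metis
  have "uniform_limit (cball x d) (\<lambda>n s. \<Sum>i<n. f i s) (\<lambda>s. \<Sum>n. f n s) sequentially"
    by (rule Weierstrass_m_test_ev[OF ev M])
  with d show "\<exists>d>0. cball x d \<subseteq> S \<and> uniform_limit (cball x d) (\<lambda>n s. \<Sum>i<n. f i s) (\<lambda>s. \<Sum>n. f n s) sequentially"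
    by metis
qed

lemma norm_nat_powr: "norm ((of_nat n :: complex) powr s) = real n powr Re s"
  by (subst norm_powr_real_powr) auto

lemma cball_Re_ge: "y \<in> cball x d \<Longrightarrow> Re x - d \<le> Re y"
proof -
  assume "y \<in> cball x d"
  then have "cmod (x - y) \<le> d" by (simp add: dist_norm)
  then show ?thesis using abs_Re_le_cmod[of "x-y"] by auto
qed

lemma cball_norm_le: fixes x y :: complex shows "y \<in> cball x d \<Longrightarrow> norm (1 - y) \<le> norm (1 - x) + d"
proof -
  assume "y \<in> cball x d"
  then have "cmod (x - y) \<le> d" by (simp add: dist_norm)
  moreover have "norm (1 - y) \<le> norm (1 - x) + norm (x - y)"
    using norm_triangle_ineq[of "1 - x" "x - y"] by simp
  ultimately show ?thesis by simp
qed

definition zs :: "complex \<Rightarrow> complex" where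
  "zs s = (\<Sum>k. of_nat (Suc k) powr (-s))"

lemma summable_zs_real: "1 < \<sigma> \<Longrightarrow> summable (\<lambda>k. real (Suc k) powr (-\<sigma>))"
proof -
  assume "1 < \<sigma>"
  then have "summable (\<lambda>n. real n powr (-\<sigma>))" by (simp add: summable_real_powr_iff)
  then have "summable (\<lambda>k. (\<lambda>n. real n powr (-\<sigma>)) (Suc k))"
    by (subst summable_Suc_iff)
  then show ?thesis by simp
qed

lemma summable_zs: "1 < Re s \<Longrightarrow> summable (\<lambda>k. (of_nat (Suc k) :: complex) powr (-s))"
  by (rule summable_norm_cancel, unfold norm_nat_powr) (use summable_zs_real[of "Re s"] in simp)

lemma sums_zs: "1 < Re s \<Longrightarrow> (\<lambda>k. (of_nat (Suc k) :: complex) powr (-s)) sums zs s"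
  unfolding zs_def using summable_zs by (simp add: summable_sums)

lemma zs_holo: "zs holomorphic_on {s. 1 < Re s}"
proof -
  have "(\<lambda>s. \<Sum>k. (\<lambda>k s. (of_nat (Suc k)::complex) powr (-s)) k s) holomorphic_on {s. 1 < Re s}"
  proof (rule holo_suminf)
    show "open {s. 1 < Re s}" by (simp add: open_halfspace_Re_gt)
    show "(\<lambda>s. (of_nat (Suc k)::complex) powr (-s)) holomorphic_on {s. 1 < Re s}" for k
      by (intro holomorphic_intros)
    fix x assume x: "x \<in> {s. 1 < Re s}"
    define d where "d = (Re x - 1)/2"
    have d: "d > 0" using x by (simp add: d_def)
    have x1: "1 < Re x" using x by simp
    have sub: "cball x d \<subseteq> {s. 1 < Re s}"
    proof
      fix y assume "y \<in> cball x d"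
      then have "Re x - d \<le> Re y" by (rule cball_Re_ge)
      moreover have "1 < Re x" using x by simp
      ultimately have "1 < Re y" unfolding d_def by (simp add: field_simps)
      then show "y \<in> {s. 1 < Re s}" by simp
    qed
    have "\<forall>n\<ge>0. \<forall>y\<in>cball x d. norm ((of_nat (Suc n)::complex) powr (-y)) \<le> real (Suc n) powr (-(1+d))"
    proof (intro allI impI ballI)
      fix n y assume "y \<in> cball x d"
      then have "Re x - d \<le> Re y" by (rule cball_Re_ge)
      then have yd: "- Re y \<le> -(1+d)" using x1 unfolding d_def by (simp add: field_simps)
      have "norm ((of_nat (Suc n)::complex) powr (-y)) = real (Suc n) powr (- Re y)"
        by (simp only: norm_nat_powr uminus_complex.sel)
      also have "\<dots> \<le> real (Suc n) powr (-(1+d))"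
        by (rule powr_mono[OF yd]) simp
      finally show "norm ((of_nat (Suc n)::complex) powr (-y)) \<le> real (Suc n) powr (-(1+d))" .
    qed
    moreover have "summable (\<lambda>n. real (Suc n) powr (-(1+d)))" by (rule summable_zs_real) (use d in simp)
    ultimately show "\<exists>d>0. cball x d \<subseteq> {s. 1 < Re s} \<and> (\<exists>M N. summable M \<and>
       (\<forall>n\<ge>N. \<forall>y\<in>cball x d. norm ((\<lambda>k s. (of_nat (Suc k)::complex) powr (-s)) n y) \<le> M n))"
      using d sub by blast
  qed
  then show ?thesis by (simp add: zs_def[abs_def])
qed

lemma gchoose_norm_le: "norm ((a::complex) gchoose j) \<le> (1 + norm a) ^ j"
proof (induction j)
  case 0 then show ?case by simp
next
  case (Suc j)
  have eq: "of_nat (Suc j) * (a gchoose Suc j) = (a - of_nat j) * (a gchoose j)"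
    using gbinomial_mult_1[of a j] by (simp add: algebra_simps)
  have "real (Suc j) * norm (a gchoose Suc j) = norm (of_nat (Suc j) * (a gchoose Suc j))"
    by (simp only: norm_mult norm_of_nat)
  also have "\<dots> = norm ((a - of_nat j) * (a gchoose j))" by (simp only: eq)
  also have "\<dots> = norm (a - of_nat j) * norm (a gchoose j)" by (simp only: norm_mult)
  also have "\<dots> \<le> (norm a + real j) * (1 + norm a) ^ j"
  proof (rule mult_mono)
    show "norm (a - of_nat j) \<le> norm a + real j"
      using norm_triangle_ineq4[of a "of_nat j"] by simp
  qed (use Suc.IH in auto)
  also have "\<dots> \<le> (real (Suc j) * (1 + norm a)) * (1 + norm a) ^ j"
  proof (rule mult_right_mono)
    have "0 \<le> real j * norm a" by simp
    moreover have "real (Suc j) * (1 + norm a) = 1 + real j + norm a + real j * norm a"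
      by (simp add: algebra_simps)
    ultimately show "norm a + real j \<le> real (Suc j) * (1 + norm a)" by linarith
  qed simp
  also have "\<dots> = real (Suc j) * (1 + norm a) ^ Suc j"
    by (simp only: power_Suc mult.assoc mult.commute[of "1 + norm a"])
  finally have "real (Suc j) * norm (a gchoose Suc j) \<le> real (Suc j) * (1 + norm a) ^ Suc j" .
  then show ?case by (simp only: mult_le_cancel_left_pos of_nat_0_less_iff zero_less_Suc)
qed

lemma gchoose_holo [holomorphic_intros]:
  "f holomorphic_on S \<Longrightarrow> (\<lambda>s. f s gchoose j) holomorphic_on S"
  unfolding gbinomial_altdef_of_nat by (intro holomorphic_intros) auto

definition Tm :: "nat \<Rightarrow> nat \<Rightarrow> complex \<Rightarrow> complex" where
  "Tm K n s = of_nat (Suc (Suc n)) powr (1 - s)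
     - (\<Sum>j\<le>K. ((1 - s) gchoose j) * of_nat (Suc n) powr (1 - s - of_nat j))"

definition RR :: "nat \<Rightarrow> complex \<Rightarrow> complex" where
  "RR K s = (\<Sum>n. Tm K n s)"

lemma sums_zs_shift:
  assumes "1 < Re s" "1 \<le> j"
  shows "(\<lambda>n. (of_nat (Suc n) :: complex) powr (1 - s - of_nat j)) sums zs (s + of_nat j - 1)"
proof -
  have "1 < Re (s + of_nat j - 1)" using assms by simp
  from sums_zs[OF this] show ?thesis by (simp add: algebra_simps)
qed

lemma Tm_sums:
  assumes s: "1 < Re s"
  shows "(\<lambda>n. Tm K n s) sums (- (\<Sum>j\<in>{1..K}. ((1-s) gchoose j) * zs (s + of_nat j - 1)) - 1)"
proof -
  define f where "f n = (of_nat (Suc n) :: complex) powr (1 - s)" for n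
  have lim: "f \<longlonglongrightarrow> 0" unfolding f_def
    by (rule tendsto_neg_powr_complex_of_nat[OF filterlim_Suc]) (use s in simp)
  have tel: "(\<lambda>n. f n - f (Suc n)) sums 1"
    using telescope_sums'[OF lim] by (simp add: f_def)
  have S: "(\<lambda>n. \<Sum>j\<in>{1..K}. ((1-s) gchoose j) * of_nat (Suc n) powr (1 - s - of_nat j))
      sums (\<Sum>j\<in>{1..K}. ((1-s) gchoose j) * zs (s + of_nat j - 1))"
    by (intro sums_sum sums_mult sums_zs_shift s) auto
  have eq: "Tm K n s = - (\<Sum>j\<in>{1..K}. ((1-s) gchoose j) * of_nat (Suc n) powr (1 - s - of_nat j))
      - (f n - f (Suc n))" for n
  proof -
    have "{..K} = insert 0 {1..K}" by auto
    then have "(\<Sum>j\<le>K. ((1 - s) gchoose j) * of_nat (Suc n) powr (1 - s - of_nat j))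
       = f n + (\<Sum>j\<in>{1..K}. ((1-s) gchoose j) * of_nat (Suc n) powr (1 - s - of_nat j))"
      by (simp add: f_def)
    then have "Tm K n s = f (Suc n) - (f n + (\<Sum>j\<in>{1..K}. ((1-s) gchoose j) * of_nat (Suc n) powr (1 - s - of_nat j)))"
      unfolding Tm_def f_def by simp
    then show ?thesis by (simp add: algebra_simps)
  qed
  show ?thesis unfolding eq using sums_diff[OF sums_minus[OF S] tel] by simp
qed

lemma cnz [simp]: "(of_nat i + 2 :: complex) \<noteq> 0" "(2 + of_nat i :: complex) \<noteq> 0"
  "(of_nat i + 1 :: complex) \<noteq> 0" "(1 + of_nat i :: complex) \<noteq> 0"
proof -
  have a: "(of_nat i + 2 :: complex) = of_nat (Suc (Suc i))" by simp
  have b: "(of_nat i + 1 :: complex) = of_nat (Suc i)" by simp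
  show "(of_nat i + 2 :: complex) \<noteq> 0" unfolding a by (rule of_nat_neq_0)
  show "(2 + of_nat i :: complex) \<noteq> 0" unfolding add.commute[of 2] a by (rule of_nat_neq_0)
  show "(of_nat i + 1 :: complex) \<noteq> 0" unfolding b by (rule of_nat_neq_0)
  show "(1 + of_nat i :: complex) \<noteq> 0" unfolding add.commute[of 1] b by (rule of_nat_neq_0)
qed
lemma sum_split_2:
  "(\<Sum>j\<in>{1..Suc (Suc M)}. F j) = F 1 + (\<Sum>i<Suc M. F (i + 2))"
  by (induction M) (simp_all add: numeral_2_eq_2 ac_simps)
lemma gchoose_step:
  fixes s :: complex
  shows "((1 - s) gchoose (i + 2)) = - ((1 - s) gchoose (i + 1)) * (s + of_nat i) / of_nat (i + 2)"
proof -
  have h: "(1 - s) * ((1 - s) gchoose (Suc i)) = of_nat (Suc i) * ((1 - s) gchoose (Suc i))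
      + of_nat (Suc (Suc i)) * ((1 - s) gchoose (Suc (Suc i)))"
    by (rule gbinomial_mult_1)
  have "of_nat (Suc (Suc i)) * ((1 - s) gchoose (Suc (Suc i)))
      = (1 - s) * ((1 - s) gchoose (Suc i)) - of_nat (Suc i) * ((1 - s) gchoose (Suc i))"
    by (simp only: h add_diff_cancel_left')
  also have "\<dots> = - ((1 - s) gchoose (Suc i)) * (s + of_nat i)"
    by (simp add: algebra_simps)
  finally have e: "of_nat (Suc (Suc i)) * ((1 - s) gchoose (Suc (Suc i))) = - ((1 - s) gchoose (Suc i)) * (s + of_nat i)" .
  have nz: "(of_nat (Suc (Suc i)) :: complex) \<noteq> 0" by (rule of_nat_neq_0)
  have "((1 - s) gchoose (Suc (Suc i))) = (of_nat (Suc (Suc i)) * ((1 - s) gchoose (Suc (Suc i)))) / of_nat (Suc (Suc i))"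
    using nz by simp
  also have "\<dots> = - ((1 - s) gchoose (Suc i)) * (s + of_nat i) / of_nat (Suc (Suc i))"
    by (simp only: e)
  finally show ?thesis by (simp add: numeral_2_eq_2)
qed
lemma aux: "R = -A - 1 \<Longrightarrow> A = a + - B \<Longrightarrow> a = (1 - s) * z \<Longrightarrow> (s - 1) * z = 1 + R - (B::complex)"
  by (simp add: algebra_simps)

lemma key_identity:
  assumes s: "1 < Re s"
  shows "(s - 1) * zs s = 1 + RR (M + 2) s -
     (\<Sum>i<Suc M. ((1 - s) gchoose (i + 1)) / of_nat (i + 2) * ((s + of_nat i + 1 - 1) * zs (s + of_nat i + 1)))"
proof -
  have R: "RR (M+2) s = - (\<Sum>j\<in>{1..M+2}. ((1-s) gchoose j) * zs (s + of_nat j - 1)) - 1"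
    unfolding RR_def by (rule sums_unique[OF Tm_sums[OF s, of "M+2"], symmetric])
  have "(\<Sum>j\<in>{1..M+2}. ((1-s) gchoose j) * zs (s + of_nat j - 1))
     = (1 - s) * zs s + (\<Sum>i<Suc M. ((1-s) gchoose (i+2)) * zs (s + of_nat (i+2) - 1))"
    using sum_split_2[of "\<lambda>j. ((1-s) gchoose j) * zs (s + of_nat j - 1)" M] by simp
  also have "(\<Sum>i<Suc M. ((1-s) gchoose (i+2)) * zs (s + of_nat (i+2) - 1))
     = - (\<Sum>i<Suc M. ((1 - s) gchoose (i + 1)) / of_nat (i + 2) * ((s + of_nat i + 1 - 1) * zs (s + of_nat i + 1)))"
    unfolding sum_negf[symmetric]
  proof (rule sum.cong[OF refl])
    fix i assume "i \<in> {..<Suc M}"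
    have "s + of_nat (i+2) - 1 = s + of_nat i + 1" by simp
    then show "((1-s) gchoose (i+2)) * zs (s + of_nat (i+2) - 1)
      = - (((1 - s) gchoose (i + 1)) / of_nat (i + 2) * ((s + of_nat i + 1 - 1) * zs (s + of_nat i + 1)))"
      by (subst gchoose_step) (simp add: field_simps)
  qed
  finally have A: "(\<Sum>j\<in>{1..M+2}. ((1-s) gchoose j) * zs (s + of_nat j - 1))
     = (1 - s) * zs s + - (\<Sum>i<Suc M. ((1 - s) gchoose (i + 1)) / of_nat (i + 2) * ((s + of_nat i + 1 - 1) * zs (s + of_nat i + 1)))" .
  show ?thesis by (rule aux[OF R A refl])
qed

primrec hh :: "nat \<Rightarrow> complex \<Rightarrow> complex" where
  "hh 0 = (\<lambda>s. (s - 1) * zs s)"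
| "hh (Suc M) = (\<lambda>s. 1 + RR (M + 2) s -
     (\<Sum>i<Suc M. ((1 - s) gchoose (i + 1)) / of_nat (i + 2) * hh M (s + of_nat i + 1)))"

lemma hh_eq: "1 < Re s \<Longrightarrow> hh M s = (s - 1) * zs s"
proof (induction M arbitrary: s)
  case 0 then show ?case by simp
next
  case (Suc M)
  have "hh M (s + of_nat i + 1) = (s + of_nat i + 1 - 1) * zs (s + of_nat i + 1)" for i
    by (rule Suc.IH) (use Suc.prems in simp)
  then show ?case using key_identity[OF Suc.prems, of M] by simp
qed

lemma Tm_bound:
  fixes s :: complex
  assumes X0: "2 * (1 + norm (1 - s)) \<le> real (Suc n)" and sig: "\<sigma> \<le> Re s"
  shows "norm (Tm K n s) \<le> 2 * (1 + norm (1 - s)) ^ (K + 1) * real (Suc n) powr (- \<sigma> - real K)"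
proof -
  define a where "a = 1 - s"
  define q where "q = 1 + norm a"
  define X where "X = real (Suc n)"
  have q1: "1 \<le> q" unfolding q_def by simp
  have Xq: "2 * q \<le> X" using X0 by (simp add: q_def a_def X_def)
  have X2: "2 \<le> X" using Xq q1 by linarith
  have Xpos: "0 < X" using X2 by linarith
  define g where "g j = (a gchoose j) * of_nat (Suc n) powr (a - of_nat j)" for j
  have bin: "(\<lambda>j. (a gchoose j) * of_real X powr (a - of_nat j) * of_real 1 ^ j) sums of_real (X + 1) powr a"
    by (rule gen_binomial_complex'') (use X2 in simp)
  have e1: "(of_real X :: complex) = of_nat (Suc n)" unfolding X_def by (rule of_real_of_nat_eq)
  have e2: "(of_real (X + 1) :: complex) = of_nat (Suc (Suc n))" unfolding X_def
    by (metis of_nat_Suc of_real_of_nat_eq add.commute)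
  have bin': "g sums (of_nat (Suc (Suc n)) powr a)"
    using bin unfolding e1 e2 g_def by simp
  have split: "(\<lambda>j. g (j + Suc K)) sums (of_nat (Suc (Suc n)) powr a - (\<Sum>j<Suc K. g j))"
    by (rule sums_split_initial_segment[OF bin'])
  have Tm_eq: "Tm K n s = (\<Sum>j. g (j + Suc K))"
  proof -
    have "Tm K n s = of_nat (Suc (Suc n)) powr a - (\<Sum>j<Suc K. g j)"
      unfolding Tm_def g_def a_def lessThan_Suc_atMost by (rule refl)
    then show ?thesis using sums_unique[OF split] by simp
  qed
  define c where "c = q ^ Suc K * X powr (- \<sigma> - real K)"
  have c0: "0 \<le> c" unfolding c_def using q1 by simp
  define r where "r = q / X"
  have r0: "0 \<le> r" and r2: "r \<le> 1/2" unfolding r_def using q1 Xq Xpos by (auto simp: field_simps)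
  have bnd: "norm (g (j + Suc K)) \<le> c * r ^ j" for j
  proof -
    have "norm (g (j + Suc K)) = norm (a gchoose (j + Suc K)) * X powr (Re a - real (j + Suc K))"
      unfolding g_def norm_mult norm_nat_powr X_def by simp
    also have "\<dots> \<le> q ^ (j + Suc K) * X powr (Re a - real (j + Suc K))"
      by (rule mult_right_mono[OF gchoose_norm_le[of a "j + Suc K", folded q_def]]) simp
    also have "X powr (Re a - real (j + Suc K)) \<le> X powr (- \<sigma> - real K - real j)"
      by (rule powr_mono) (use sig X2 in \<open>auto simp: a_def\<close>)
    also have "X powr (- \<sigma> - real K - real j) = X powr (- \<sigma> - real K) * (1 / X) ^ j"
      using Xpos by (simp add: powr_diff powr_realpow power_one_over)
    also have "q ^ (j + Suc K) * (X powr (- \<sigma> - real K) * (1 / X) ^ j) = c * r ^ j"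
      unfolding c_def r_def by (simp add: power_add power_divide)
    finally show ?thesis using q1 by (simp add: mult_left_mono)
  qed
  have rsum: "(\<lambda>j. r ^ j) sums (1 / (1 - r))" by (rule geometric_sums) (use r0 r2 in simp)
  have bsum: "(\<lambda>j. c * r ^ j) sums (c * (1 / (1 - r)))" by (rule sums_mult[OF rsum])
  have "norm (Tm K n s) \<le> (\<Sum>j. c * r ^ j)"
    unfolding Tm_eq by (rule norm_suminf_le[OF bnd sums_summable[OF bsum]])
  also have "\<dots> = c * (1 / (1 - r))" by (rule sums_unique[OF bsum, symmetric])
  also have "\<dots> \<le> c * 2"
  proof (rule mult_left_mono[OF _ c0])
    show "1 / (1 - r) \<le> 2" using r2 by (simp add: field_simps)
  qed
  also have "c * 2 = 2 * (1 + norm (1 - s)) ^ (K + 1) * real (Suc n) powr (- \<sigma> - real K)"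
    unfolding c_def q_def a_def X_def by simp
  finally show ?thesis .
qed

lemma Tm_holo: "(\<lambda>s. Tm K n s) holomorphic_on S"
  unfolding Tm_def by (intro holomorphic_intros)

lemma RR_holo: "RR K holomorphic_on {s. 1 - real K < Re s}"
proof -
  have "(\<lambda>s. \<Sum>n. (\<lambda>n s. Tm K n s) n s) holomorphic_on {s. 1 - real K < Re s}"
  proof (rule holo_suminf)
    show "open {s. 1 - real K < Re s}" by (simp add: open_halfspace_Re_gt)
    show "(\<lambda>s. Tm K n s) holomorphic_on {s. 1 - real K < Re s}" for n by (rule Tm_holo)
    fix x assume x: "x \<in> {s. 1 - real K < Re s}"
    have x1: "1 - real K < Re x" using x by simp
    define d where "d = (Re x + real K - 1) / 2"
    define \<sigma>0 where "\<sigma>0 = Re x - d"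
    define Q where "Q = 1 + norm (1 - x) + d"
    define N where "N = nat \<lceil>2 * Q\<rceil>"
    have d: "0 < d" using x1 by (simp add: d_def field_simps)
    have sig: "1 < \<sigma>0 + real K" using x1 by (simp add: \<sigma>0_def d_def field_simps)
    have sub: "cball x d \<subseteq> {s. 1 - real K < Re s}"
    proof
      fix y assume "y \<in> cball x d"
      then have "\<sigma>0 \<le> Re y" unfolding \<sigma>0_def by (rule cball_Re_ge)
      then have "1 - real K < Re y" using sig by linarith
      then show "y \<in> {s. 1 - real K < Re s}" by simp
    qed
    have bound: "\<forall>n\<ge>N. \<forall>y\<in>cball x d. norm (Tm K n y) \<le> 2 * Q ^ (K+1) * real (Suc n) powr (-(\<sigma>0 + real K))"
    proof (intro allI impI ballI)
      fix n y assume n: "N \<le> n" and y: "y \<in> cball x d"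
      have ny: "norm (1 - y) \<le> norm (1 - x) + d" by (rule cball_norm_le[OF y])
      have qy: "1 + norm (1 - y) \<le> Q" using ny by (simp add: Q_def)
      have QN: "2 * Q \<le> real N" unfolding N_def by (rule real_nat_ceiling_ge)
      have Nn: "real N \<le> real n" using n by simp
      have X: "2 * (1 + norm (1 - y)) \<le> real (Suc n)" using qy QN Nn by simp
      have sy: "\<sigma>0 \<le> Re y" unfolding \<sigma>0_def by (rule cball_Re_ge[OF y])
      have "norm (Tm K n y) \<le> 2 * (1 + norm (1 - y)) ^ (K + 1) * real (Suc n) powr (- \<sigma>0 - real K)"
        by (rule Tm_bound[OF X sy])
      also have "\<dots> \<le> 2 * Q ^ (K+1) * real (Suc n) powr (- \<sigma>0 - real K)"
        by (intro mult_right_mono mult_left_mono power_mono qy) simp_all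
      finally show "norm (Tm K n y) \<le> 2 * Q ^ (K+1) * real (Suc n) powr (-(\<sigma>0 + real K))" by simp
    qed
    have summ: "summable (\<lambda>n. 2 * Q ^ (K+1) * real (Suc n) powr (-(\<sigma>0 + real K)))"
      by (intro summable_mult summable_zs_real sig)
    show "\<exists>d>0. cball x d \<subseteq> {s. 1 - real K < Re s} \<and>
       (\<exists>M N. summable M \<and> (\<forall>n\<ge>N. \<forall>y\<in>cball x d. norm ((\<lambda>n s. Tm K n s) n y) \<le> M n))"
    proof (intro exI conjI)
      show "0 < d" by (rule d)
      show "cball x d \<subseteq> {s. 1 - real K < Re s}" by (rule sub)
      show "summable (\<lambda>n. 2 * Q ^ (K+1) * real (Suc n) powr (-(\<sigma>0 + real K)))" by (rule summ)
      show "\<forall>n\<ge>N. \<forall>y\<in>cball x d. norm ((\<lambda>n s. Tm K n s) n y) \<le> 2 * Q ^ (K+1) * real (Suc n) powr (-(\<sigma>0 + real K))"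
        using bound by simp
    qed
  qed
  then show ?thesis by (simp add: RR_def[abs_def])
qed

lemma hol_shift:
  assumes g: "g holomorphic_on {s. a < Re s}"
  shows "(\<lambda>s. g (s + of_nat i + 1)) holomorphic_on {s. a - real i - 1 < Re s}"
proof -
  have "(g \<circ> (\<lambda>s. s + of_nat i + 1)) holomorphic_on {s. a - real i - 1 < Re s}"
    by (rule holomorphic_on_compose_gen[OF _ g]) (auto intro!: holomorphic_intros)
  then show ?thesis by (simp add: o_def)
qed

lemma hh_holo: "hh M holomorphic_on {s. 1 - real M < Re s}"
proof (induction M)
  case 0
  have "(\<lambda>s. (s - 1) * zs s) holomorphic_on {s. 1 < Re s}" by (intro holomorphic_intros zs_holo)
  then show ?case by simp
next
  case (Suc M)
  let ?S = "{s. 1 - real (Suc M) < Re s}"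
  have R: "RR (M+2) holomorphic_on ?S" by (rule holomorphic_on_subset[OF RR_holo]) auto
  have H: "(\<lambda>s. hh M (s + of_nat i + 1)) holomorphic_on ?S" for i
    by (rule holomorphic_on_subset[OF hol_shift[OF Suc.IH, of i]]) auto
  have "(\<lambda>s. 1 + RR (M + 2) s -
     (\<Sum>i<Suc M. ((1 - s) gchoose (i + 1)) / of_nat (i + 2) * hh M (s + of_nat i + 1))) holomorphic_on ?S"
    by (intro holomorphic_intros R H) auto
  then show ?case by simp
qed

definition lvl :: "complex \<Rightarrow> nat" where "lvl s = nat \<lceil>2 - Re s\<rceil>"
definition HH :: "complex \<Rightarrow> complex" where "HH s = hh (lvl s) s"

lemma lvl: "1 - real (lvl s) < Re s"
  using real_nat_ceiling_ge[of "2 - Re s"] unfolding lvl_def by linarith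

lemma hh_agree:
  assumes "1 - real M < Re s" "1 - real M' < Re s"
  shows "hh M s = hh M' s"
proof -
  define m where "m = min M M'"
  have sm: "1 - real m < Re s" using assms by (simp add: m_def min_def)
  have o1: "open {s. 1 < Re s}" by (simp add: open_halfspace_Re_gt)
  have o2: "open {s. 1 - real m < Re s}" by (simp add: open_halfspace_Re_gt)
  have ne: "{s. 1 < Re s} \<noteq> {}"
  proof -
    have "(2::complex) \<in> {s. 1 < Re s}" by simp
    then show ?thesis by blast
  qed
  have co: "connected {s. 1 - real m < Re s}" by (rule convex_connected) (rule convex_halfspace_Re_gt)
  have su: "{s. 1 < Re s} \<subseteq> {s. 1 - real m < Re s}" by auto
  have h1: "hh M holomorphic_on {s. 1 - real m < Re s}"
    by (rule holomorphic_on_subset[OF hh_holo]) (auto simp: m_def)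
  have h2: "hh M' holomorphic_on {s. 1 - real m < Re s}"
    by (rule holomorphic_on_subset[OF hh_holo]) (auto simp: m_def)
  have eq: "\<And>z. z \<in> {s. 1 < Re s} \<Longrightarrow> hh M z = hh M' z" using hh_eq by simp
  have sm': "s \<in> {s. 1 - real m < Re s}" using sm by simp
  show ?thesis by (rule analytic_continuation_open[OF o1 o2 ne co su h1 h2 eq sm'])
qed

lemma HH_eq_hh: "1 - real M < Re s \<Longrightarrow> HH s = hh M s"
  unfolding HH_def by (rule hh_agree[OF lvl])

lemma HH_holo_on: "HH holomorphic_on {s. 1 - real M < Re s}"
  by (rule holomorphic_transform[OF hh_holo]) (simp add: HH_eq_hh)

lemma HH_holo: "HH holomorphic_on UNIV"
proof -
  have "HH field_differentiable (at z)" for z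
  proof -
    have "z \<in> {s. 1 - real (lvl z) < Re s}" using lvl by simp
    then show ?thesis
      using holomorphic_on_imp_differentiable_at[OF HH_holo_on open_halfspace_Re_gt] by blast
  qed
  then show ?thesis by (simp add: holomorphic_on_def field_differentiable_at_within)
qed

lemma HH_rec:
  assumes "- real M < Re s"
  shows "HH s = 1 + RR (M + 2) s -
     (\<Sum>i<Suc M. ((1 - s) gchoose (i + 1)) / of_nat (i + 2) * HH (s + of_nat i + 1))"
proof -
  have "HH s = hh (Suc M) s" by (rule HH_eq_hh) (use assms in simp)
  moreover have "hh M (s + of_nat i + 1) = HH (s + of_nat i + 1)" for i
    by (rule HH_eq_hh[symmetric]) (use assms in simp)
  ultimately show ?thesis by simp
qed

definition ZZ :: "complex \<Rightarrow> complex" where "ZZ s = HH s / (s - 1)"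

lemma ZZ_eq: "1 < Re s \<Longrightarrow> ZZ s = zs s"
proof -
  assume s: "1 < Re s"
  then have "s \<noteq> 1" by auto
  moreover have "HH s = (s - 1) * zs s" using HH_eq_hh[of 0 s] s by simp
  ultimately show ?thesis unfolding ZZ_def by simp
qed

lemma ZZ_holo: "ZZ holomorphic_on (UNIV - {1})"
  unfolding ZZ_def[abs_def]
  by (intro holomorphic_intros holomorphic_on_subset[OF HH_holo]) auto

lemma riemann_zeta_eq:
  assumes "s \<noteq> 1"
  shows "riemann_zeta s = ZZ s"
proof -
  have pw: "(of_nat (Suc k) :: complex) powr (-w) = 1 / (of_nat (Suc k)) powr w" for k w
    by (rule powr_minus_divide)
  have P: "ZZ holomorphic_on (UNIV - {1}) \<and>
      (\<forall>s. 1 < Re s \<longrightarrow> ZZ s = (\<Sum>k. 1 / (of_nat (Suc k)) powr s))"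
    using ZZ_holo ZZ_eq[unfolded zs_def pw] by simp
  have Q: "riemann_zeta holomorphic_on (UNIV - {1}) \<and>
      (\<forall>s. 1 < Re s \<longrightarrow> riemann_zeta s = (\<Sum>k. 1 / (of_nat (Suc k)) powr s))"
    unfolding riemann_zeta_def by (rule someI[where x = ZZ]) (rule P)
  have o1: "open {s. 1 < Re s}" by (simp add: open_halfspace_Re_gt)
  have o2: "open (UNIV - {1::complex})" by (simp add: open_Diff)
  have ne: "{s. 1 < Re s} \<noteq> {}"
  proof -
    have "(2::complex) \<in> {s. 1 < Re s}" by simp
    then show ?thesis by blast
  qed
  have co: "connected (UNIV - {1::complex})"
    using connected_punctured_universe[of "1::complex"] by (simp add: Compl_eq_Diff_UNIV)
  have su: "{s. 1 < Re s} \<subseteq> UNIV - {1::complex}" by auto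
  have eq: "\<And>z. z \<in> {s. 1 < Re s} \<Longrightarrow> riemann_zeta z = ZZ z" using P Q by simp
  have s1: "s \<in> UNIV - {1}" using assms by simp
  show ?thesis by (rule analytic_continuation_open[OF o1 o2 ne co su conjunct1[OF Q] conjunct1[OF P] eq s1])
qed

lemma Tm_nat:
  assumes "Suc m \<le> K"
  shows "Tm K n (- of_nat m) = 0"
proof -
  define N where "N = Suc m"
  have a: "1 - (- of_nat m) = (of_nat N :: complex)" by (simp add: N_def)
  have nz: "(of_nat (Suc n) :: complex) \<noteq> 0" by (rule of_nat_neq_0)
  have "(\<Sum>j\<le>K. ((1 - (- of_nat m)) gchoose j) * of_nat (Suc n) powr (1 - (- of_nat m) - of_nat j))
      = (\<Sum>j\<le>N. ((of_nat N::complex) gchoose j) * of_nat (Suc n) powr (of_nat N - of_nat j))"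
    unfolding a
  proof (rule sum.mono_neutral_right)
    show "finite {..K}" by simp
    show "{..N} \<subseteq> {..K}" using assms N_def by auto
    show "\<forall>i\<in>{..K} - {..N}. ((of_nat N::complex) gchoose i) * of_nat (Suc n) powr (of_nat N - of_nat i) = 0"
      by (auto simp: binomial_gbinomial[symmetric])
  qed
  also have "\<dots> = (\<Sum>j\<le>N. of_nat (N choose j) * of_nat (Suc n) ^ (N - j))"
  proof (rule sum.cong[OF refl])
    fix j assume "j \<in> {..N}"
    then have jN: "j \<le> N" by simp
    have d: "(of_nat N - of_nat j :: complex) = of_nat (N - j)" using jN by simp
    have "(of_nat (Suc n) :: complex) powr (of_nat N - of_nat j) = of_nat (Suc n) ^ (N - j)"
      unfolding d by (rule powr_nat') (use nz in blast)
    then show "((of_nat N::complex) gchoose j) * of_nat (Suc n) powr (of_nat N - of_nat j)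
       = of_nat (N choose j) * of_nat (Suc n) ^ (N - j)"
      by (simp add: binomial_gbinomial)
  qed
  also have "\<dots> = (1 + of_nat (Suc n)) ^ N"
    using binomial_ring[of 1 "of_nat (Suc n) :: complex" N] by simp
  also have "\<dots> = of_nat (Suc (Suc n)) powr (1 - (- of_nat m))"
  proof -
    have "(1 + of_nat (Suc n) :: complex) = of_nat (Suc (Suc n))" by simp
    moreover have "(of_nat (Suc (Suc n)) :: complex) powr (of_nat N) = of_nat (Suc (Suc n)) ^ N"
      by (rule powr_nat') (use of_nat_neq_0 in blast)
    ultimately show ?thesis unfolding a by simp
  qed
  finally show ?thesis unfolding Tm_def by simp
qed

lemma RR_nat: "Suc m \<le> K \<Longrightarrow> RR K (- of_nat m) = 0"
  unfolding RR_def by (simp add: Tm_nat)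

lemma HH_one: "HH 1 = 1"
proof -
  have "Tm 2 n 1 = 0" for n
    unfolding Tm_def by (simp add: gbinomial_0_left numeral_2_eq_2)
  then have R0: "RR 2 1 = 0" unfolding RR_def by simp
  show ?thesis using HH_rec[of 0 1] R0 by (simp add: gbinomial_0_left numeral_2_eq_2)
qed

definition bb :: "nat \<Rightarrow> complex" where "bb k = HH (1 - of_nat k)"

lemma bb0: "bb 0 = 1" unfolding bb_def using HH_one by simp

lemma bb_rec:
  "bb (Suc m) = 1 - (\<Sum>i\<le>m. of_nat (Suc m choose (i + 1)) / of_nat (i + 2) * bb (m - i))"
proof -
  have lt: "- real (Suc m) < Re (- of_nat m :: complex)" by simp
  have "HH (- of_nat m) = 1 + RR (Suc m + 2) (- of_nat m) -
     (\<Sum>i<Suc (Suc m). ((1 - (- of_nat m)) gchoose (i + 1)) / of_nat (i + 2) * HH (- of_nat m + of_nat i + 1))"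
    by (rule HH_rec[OF lt])
  also have "RR (Suc m + 2) (- of_nat m) = 0" by (rule RR_nat) simp
  also have "(\<Sum>i<Suc (Suc m). ((1 - (- of_nat m)) gchoose (i + 1)) / of_nat (i + 2) * HH (- of_nat m + of_nat i + 1))
     = (\<Sum>i<Suc m. ((1 - (- of_nat m)) gchoose (i + 1)) / of_nat (i + 2) * HH (- of_nat m + of_nat i + 1))"
  proof -
    have e: "(1 + of_nat m :: complex) = of_nat (Suc m)" by simp
    have "((1 + of_nat m :: complex) gchoose Suc (Suc m)) = 0"
      by (simp only: e binomial_gbinomial[symmetric] binomial_eq_0[OF lessI] of_nat_0)
    then show ?thesis by simp
  qed
  also have "\<dots> = (\<Sum>i\<le>m. of_nat (Suc m choose (i + 1)) / of_nat (i + 2) * bb (m - i))"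
  proof (rule sum.cong)
    show "{..<Suc m} = {..m}" by auto
  next
    fix i assume "i \<in> {..m}"
    then have im: "i \<le> m" by simp
    have e1: "(1 - (- of_nat m) :: complex) = of_nat (Suc m)" by simp
    have e2: "(- of_nat m + of_nat i + 1 :: complex) = 1 - of_nat (m - i)"
      using im by simp
    show "((1 - (- of_nat m)) gchoose (i + 1)) / of_nat (i + 2) * HH (- of_nat m + of_nat i + 1)
       = of_nat (Suc m choose (i + 1)) / of_nat (i + 2) * bb (m - i)"
      unfolding e1 e2 binomial_gbinomial[symmetric] bb_def by (rule refl)
  qed
  finally show ?thesis unfolding bb_def by simp
qed

lemma bb1: "bb 1 = 1/2"
proof -
  have "bb (Suc 0) = 1 - (\<Sum>i\<le>0. of_nat (Suc 0 choose (i + 1)) / of_nat (i + 2) * bb (0 - i))"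
    by (rule bb_rec)
  also have "\<dots> = 1/2" using bb0 by simp
  finally show ?thesis by simp
qed

lemma bb_binom2:
  "(\<Sum>k\<le>Suc m. of_nat (Suc (Suc m) choose k) * bb k) = of_nat (Suc (Suc m))"
proof -
  define n where "n = Suc (Suc m)"
  have nz: "(of_nat n :: complex) \<noteq> 0" unfolding n_def by (rule of_nat_neq_0)
  have coef: "of_nat n * (of_nat (Suc m choose (i + 1)) / of_nat (i + 2)) = (of_nat (n choose (i + 2)) :: complex)" for i
  proof -
    have "Suc (Suc m) * (Suc m choose Suc i) = (Suc (Suc m) choose Suc (Suc i)) * Suc (Suc i)"
      by (rule Suc_times_binomial_eq)
    then have "(of_nat n * of_nat (Suc m choose (i + 1)) :: complex) = of_nat (n choose (i + 2)) * of_nat (i + 2)"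
      unfolding n_def by (metis Suc_eq_plus1 add_2_eq_Suc' of_nat_mult)
    moreover have "(of_nat (i + 2) :: complex) \<noteq> 0" by (metis add_2_eq_Suc' of_nat_neq_0)
    ultimately show ?thesis by (simp add: field_simps)
  qed
  have "of_nat n * bb (Suc m) = of_nat n * 1 - (\<Sum>i\<le>m. of_nat n * (of_nat (Suc m choose (i + 1)) / of_nat (i + 2) * bb (m - i)))"
    by (simp only: bb_rec[of m] right_diff_distrib sum_distrib_left)
  also have "(\<Sum>i\<le>m. of_nat n * (of_nat (Suc m choose (i + 1)) / of_nat (i + 2) * bb (m - i)))
     = (\<Sum>i\<le>m. of_nat (n choose (i + 2)) * bb (m - i))"
    by (rule sum.cong[OF refl]) (simp only: mult.assoc[symmetric] coef)
  also have "of_nat n * 1 = (of_nat n :: complex)" by simp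
  also have "(\<Sum>i\<le>m. of_nat (n choose (i + 2)) * bb (m - i)) = (\<Sum>k\<le>m. of_nat (n choose k) * bb k)"
  proof -
    define G where "G k = of_nat (n choose (m - k + 2)) * bb k" for k
    have "(\<Sum>i\<le>m. of_nat (n choose (i + 2)) * bb (m - i)) = (\<Sum>i<Suc m. G (Suc m - Suc i))"
      by (rule sum.cong) (auto simp: G_def)
    also have "\<dots> = (\<Sum>i<Suc m. G i)" by (rule sum.nat_diff_reindex)
    also have "\<dots> = (\<Sum>k\<le>m. of_nat (n choose k) * bb k)"
    proof (rule sum.cong)
      fix k assume "k \<in> {..m}"
      then have "k \<le> n" "n - k = m - k + 2" unfolding n_def by auto
      then show "G k = of_nat (n choose k) * bb k"
        unfolding G_def using binomial_symmetric[of k n] by simp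
    qed auto
    finally show ?thesis .
  qed
  finally have "of_nat n * bb (Suc m) + (\<Sum>k\<le>m. of_nat (n choose k) * bb k) = of_nat n" by simp
  moreover have "(n choose Suc m) = n" unfolding n_def by simp
  ultimately show ?thesis unfolding n_def[symmetric] by (simp add: add.commute)
qed

lemma bb_binom:
  assumes "1 \<le> n"
  shows "(\<Sum>k<n. of_nat (n choose k) * bb k) = of_nat n"
proof (cases n)
  case 0 then show ?thesis using assms by simp
next
  case (Suc n')
  show ?thesis
  proof (cases n')
    case 0 then show ?thesis using Suc bb0 by simp
  next
    case (Suc m)
    have "{..<n} = {..Suc m}" using \<open>n = Suc n'\<close> Suc by auto
    then show ?thesis using bb_binom2[of m] \<open>n = Suc n'\<close> Suc by simp
  qed
qed

definition BB :: "complex fps" where "BB = Abs_fps (\<lambda>k. bb k / fact k)"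

abbreviation EE :: "complex fps" where "EE \<equiv> fps_exp 1"

lemma BB_nth: "BB $ k = bb k / fact k" unfolding BB_def by simp

lemma BB_eq: "BB * (EE - 1) = fps_X * EE"
proof (rule fps_ext)
  fix n
  show "(BB * (EE - 1)) $ n = (fps_X * EE) $ n"
  proof (cases n)
    case 0 then show ?thesis by (simp add: fps_mult_nth)
  next
    case (Suc n')
    have "(BB * (EE - 1)) $ n = (\<Sum>i=0..n. BB $ i * (EE - 1) $ (n - i))" by (rule fps_mult_nth)
    also have "\<dots> = (\<Sum>i<n. bb i / (fact i * fact (n - i)))"
    proof -
      have "{0..n} = insert n {..<n}" by auto
      then have "(\<Sum>i=0..n. BB $ i * (EE - 1) $ (n - i)) = BB $ n * (EE - 1) $ 0 + (\<Sum>i<n. BB $ i * (EE - 1) $ (n - i))"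
        by simp
      also have "\<dots> = (\<Sum>i<n. bb i / (fact i * fact (n - i)))"
        by (simp add: BB_nth)
      finally show ?thesis .
    qed
    also have "\<dots> = (\<Sum>k<n. of_nat (n choose k) * bb k) / fact n"
      unfolding sum_divide_distrib
    proof (rule sum.cong[OF refl])
      fix k assume "k \<in> {..<n}"
      then have "k \<le> n" by simp
      then show "bb k / (fact k * fact (n - k)) = of_nat (n choose k) * bb k / fact n"
        by (simp add: binomial_fact)
    qed
    also have "\<dots> = of_nat n / fact n" using bb_binom[of n] Suc by simp
    also have "\<dots> = 1 / fact n'" using Suc by (simp add: fact_Suc del: of_nat_Suc)
    also have "\<dots> = (fps_X * EE) $ n" using Suc by simp
    finally show ?thesis .
  qed
qed

lemma EE_nz: "EE \<noteq> 0"
proof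
  assume "EE = 0"
  then have "EE $ 0 = 0" by simp
  then show False by simp
qed

lemma BB_ric: "fps_X * fps_deriv BB + BB * BB - BB - fps_X * BB = 0"
proof -
  have A: "BB * (EE - 1) = fps_X * EE" by (rule BB_eq)
  have "fps_deriv (BB * (EE - 1)) = fps_deriv (fps_X * EE)" using A by simp
  then have A': "fps_deriv BB * (EE - 1) + BB * EE = EE + fps_X * EE"
    by (simp add: algebra_simps)
  have "(fps_X * fps_deriv BB + BB * BB - BB - fps_X * BB) * EE = 0"
    using A A' by algebra
  then show ?thesis using EE_nz by simp
qed

definition CC :: "complex fps" where "CC = BB - fps_const (1/2) * fps_X"

lemma CC_nth: "fps_nth CC n = (if n = 1 then fps_nth BB n - 1/2 else fps_nth BB n)"
  unfolding CC_def by (simp add: fps_X_nth)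

lemma CC0: "fps_nth CC 0 = 1" by (simp add: CC_nth BB_nth bb0)
lemma CC1: "fps_nth CC 1 = 0" using bb1 by (simp add: CC_nth BB_nth)

lemma CC_ric: "fps_X * fps_deriv CC + CC * CC - CC - fps_const (1/4) * fps_X ^ 2 = 0"
proof -
  define h :: "complex fps" where "h = fps_const (1/2)"
  define q :: "complex fps" where "q = fps_const (1/4)"
  have h2: "h + h = 1" unfolding h_def by (simp add: fps_const_add[symmetric])
  have hq: "h * h = q" unfolding h_def q_def by (simp add: fps_const_mult)
  have C: "CC = BB - h * fps_X" unfolding CC_def h_def by simp
  have C': "fps_deriv CC = fps_deriv BB - h" unfolding CC_def h_def by simp
  have R: "fps_X * fps_deriv BB + BB * BB - BB - fps_X * BB = 0" by (rule BB_ric)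
  have "fps_X * fps_deriv CC + CC * CC - CC - q * fps_X ^ 2 = 0"
    using h2 hq C C' R by algebra
  then show ?thesis unfolding q_def .
qed

lemma sum_split_ends:
  fixes n :: nat
  assumes "1 \<le> n"
  shows "(\<Sum>i=0..n. f i) = f 0 + (\<Sum>i\<in>{1..n-1}. f i) + (f n :: complex)"
proof -
  have "{0..n} = insert 0 (insert n {1..n-1})" using assms by auto
  moreover have "0 \<notin> insert n {1..n-1}" using assms by auto
  moreover have "n \<notin> {1..n-1}" by auto
  ultimately show ?thesis by (simp add: algebra_simps)
qed

lemma CC_rec:
  assumes "2 \<le> n"
  shows "of_nat (Suc n) * fps_nth CC n = (if n = 2 then 1/4 else 0) - (\<Sum>i\<in>{1..n-1}. fps_nth CC i * fps_nth CC (n - i))"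
proof -
  have e0: "fps_nth (fps_X * fps_deriv CC + CC * CC - CC - fps_const (1/4) * fps_X ^ 2) n = 0"
    using CC_ric by simp
  have e1: "fps_nth (fps_X * fps_deriv CC + CC * CC - CC - fps_const (1/4) * fps_X ^ 2) n
     = fps_nth (fps_X * fps_deriv CC) n + fps_nth (CC * CC) n - fps_nth CC n - fps_nth (fps_const (1/4) * fps_X ^ 2) n"
    by (simp only: fps_sub_nth fps_add_nth)
  have e2: "fps_nth (fps_X * fps_deriv CC) n = of_nat n * fps_nth CC n" using assms by simp
  have e3: "fps_nth (CC * CC) n = fps_nth CC n + (\<Sum>i\<in>{1..n-1}. fps_nth CC i * fps_nth CC (n - i)) + fps_nth CC n"
    unfolding fps_mult_nth using sum_split_ends[of n "\<lambda>i. fps_nth CC i * fps_nth CC (n - i)"] assms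
    by (simp add: CC0)
  have e4: "fps_nth (fps_const (1/4) * fps_X ^ 2) n = (if n = 2 then 1/4 else 0)" by simp
  have "of_nat n * fps_nth CC n + (fps_nth CC n + (\<Sum>i\<in>{1..n-1}. fps_nth CC i * fps_nth CC (n - i)) + fps_nth CC n)
      - fps_nth CC n - (if n = 2 then 1/4 else 0) = 0"
    using e0 unfolding e1 e2 e3 e4 .
  then show ?thesis by (simp add: algebra_simps)
qed

lemma CC1' [simp]: "fps_nth CC (Suc 0) = 0" using CC1 by simp

lemma CC_odd: "odd n \<Longrightarrow> fps_nth CC n = 0"
proof (induction n rule: less_induct)
  case (less n)
  show ?case
  proof (cases "n = 1")
    case True then show ?thesis by (simp add: CC1)
  next
    case False
    with less.prems have n3: "3 \<le> n" by presburger
    have "(\<Sum>i\<in>{1..n-1}. fps_nth CC i * fps_nth CC (n - i)) = 0"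
    proof (rule sum.neutral, rule ballI)
      fix i assume i: "i \<in> {1..n-1}"
      show "fps_nth CC i * fps_nth CC (n - i) = 0"
      proof (cases "odd i")
        case True then show ?thesis using less.IH[of i] i by auto
      next
        case False
        then have "odd (n - i)" using less.prems i by auto
        then show ?thesis using less.IH[of "n - i"] i by auto
      qed
    qed
    moreover have "n \<noteq> 2" using n3 by simp
    ultimately have "of_nat (Suc n) * fps_nth CC n = 0" using CC_rec[of n] n3 by simp
    then show ?thesis by (simp del: of_nat_Suc)
  qed
qed

lemma CC_Im: "Im (fps_nth CC n) = 0"
proof (induction n rule: less_induct)
  case (less n)
  show ?case
  proof (cases "2 \<le> n")
    case False
    then have "n = 0 \<or> n = 1" by auto
    then show ?thesis by (auto simp: CC0 CC1)
  next
    case True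
    have "fps_nth CC n = ((if n = 2 then 1/4 else 0) - (\<Sum>i\<in>{1..n-1}. fps_nth CC i * fps_nth CC (n - i))) / of_nat (Suc n)"
      using CC_rec[OF True] by (simp add: field_simps del: of_nat_Suc)
    moreover have "Im (\<Sum>i\<in>{1..n-1}. fps_nth CC i * fps_nth CC (n - i)) = 0"
      unfolding Im_sum by (rule sum.neutral) (use less.IH True in auto)
    ultimately show ?thesis by (simp add: Im_divide_of_nat del: of_nat_Suc)
  qed
qed

definition cc :: "nat \<Rightarrow> real" where "cc n = Re (fps_nth CC n)"

lemma CC_cc: "fps_nth CC n = of_real (cc n)"
  unfolding cc_def using CC_Im[of n] by (simp add: complex_eq_iff)

lemma cc_rec:
  assumes "2 \<le> n"
  shows "real (Suc n) * cc n = (if n = 2 then 1/4 else 0) - (\<Sum>i\<in>{1..n-1}. cc i * cc (n - i))"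
proof -
  have "of_real (real (Suc n) * cc n) = (of_real ((if n = 2 then 1/4 else 0) - (\<Sum>i\<in>{1..n-1}. cc i * cc (n - i))) :: complex)"
    using CC_rec[OF assms] unfolding CC_cc by simp
  then show ?thesis by (simp only: of_real_eq_iff)
qed

lemma cc_odd: "odd n \<Longrightarrow> cc n = 0" unfolding cc_def using CC_odd by simp

lemma cc2: "cc 2 = 1/12"
proof -
  have "real (Suc 2) * cc 2 = 1/4 - cc 1 * cc 1" using cc_rec[of 2] by simp
  moreover have "cc 1 = 0" unfolding cc_def using CC1 by simp
  ultimately show ?thesis by simp
qed

lemma sign_split:
  assumes "1 \<le> l" "l < m"
  shows "(-1::real)^m = (-1)^(l+1) * (-1)^(m - l + 1)"
proof -
  have "(l+1) + (m-l+1) = m + 2" using assms by simp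
  then have "(-1::real)^(l+1) * (-1)^(m-l+1) = (-1)^(m+2)" by (metis power_add)
  also have "\<dots> = (-1)^m" by simp
  finally show ?thesis by simp
qed

lemma cc_sign: "1 \<le> m \<Longrightarrow> 0 < (-1) ^ (m + 1) * cc (2 * m)"
proof (induction m rule: less_induct)
  case (less m)
  show ?case
  proof (cases "m = 1")
    case True then show ?thesis by (simp add: cc2)
  next
    case False
    with less.prems have m2: "2 \<le> m" by simp
    define S where "S = (\<Sum>i\<in>{1..2*m-1}. cc i * cc (2*m - i))"
    have rec: "real (Suc (2*m)) * cc (2*m) = - S"
      using cc_rec[of "2*m"] m2 unfolding S_def by simp
    have trm: "0 \<le> (-1)^m * (cc i * cc (2*m - i)) \<and> (i = 2 \<longrightarrow> 0 < (-1)^m * (cc i * cc (2*m - i)))"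
      if i: "i \<in> {1..2*m-1}" for i
    proof (cases "odd i")
      case True
      then have "i \<noteq> 2" by auto
      then show ?thesis using cc_odd[OF True] by simp
    next
      case False
      then obtain l where l: "i = 2 * l" by (auto elim: evenE)
      have l1: "1 \<le> l" "l < m" using i l by auto
      have pw: "(-1::real)^m = (-1)^(l+1) * (-1)^(m - l + 1)" by (rule sign_split[OF l1])
      have e2: "2*m - 2*l = 2*(m-l)" by simp
      have A: "0 < (-1)^(l+1) * cc (2*l)" by (rule less.IH) (use l1 in auto)
      have B: "0 < (-1)^(m - l + 1) * cc (2*(m-l))" by (rule less.IH) (use l1 in auto)
      have eq: "(-1)^m * (cc i * cc (2*m - i)) = ((-1)^(l+1) * cc (2*l)) * ((-1)^(m - l + 1) * cc (2*(m-l)))"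
        unfolding pw l e2 by (simp only: mult_ac)
      have "0 < (-1)^m * (cc i * cc (2*m - i))" unfolding eq by (rule mult_pos_pos[OF A B])
      then show ?thesis by auto
    qed
    have pos: "0 < (\<Sum>i\<in>{1..2*m-1}. (-1)^m * (cc i * cc (2*m - i)))"
    proof (rule sum_pos2)
      show "finite {1..2*m-1}" by simp
      show i2: "2 \<in> {1..2*m-1}" using m2 by simp
      show "0 < (-1)^m * (cc 2 * cc (2*m - 2))" using trm[OF i2] by simp
      show "\<And>i. i \<in> {1..2*m-1} \<Longrightarrow> 0 \<le> (-1)^m * (cc i * cc (2*m - i))" using trm by blast
    qed
    have "(-1)^(m+1) * cc (2*m) * real (Suc (2*m)) = (-1)^m * S"
    proof -
      have "(-1)^(m+1) * cc (2*m) * real (Suc (2*m)) = - ((-1)^m * (real (Suc (2*m)) * cc (2*m)))"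
        by (simp only: power_Suc[of "-1::real" m, unfolded Suc_eq_plus1] mult_ac)
      also have "\<dots> = (-1)^m * S" unfolding rec by simp
      finally show ?thesis .
    qed
    moreover have "(-1)^m * S = (\<Sum>i\<in>{1..2*m-1}. (-1)^m * (cc i * cc (2*m - i)))"
      unfolding S_def by (rule sum_distrib_left)
    ultimately have P1: "0 < (-1)^(m+1) * cc (2*m) * real (Suc (2*m))" using pos by simp
    have P2: "0 < real (Suc (2*m))" by simp
    show ?thesis by (rule zero_less_mult_pos2[OF P1 P2])
  qed
qed

lemma bb_BB: "bb k = fact k * fps_nth BB k" by (simp add: BB_nth)

lemma bb_odd: "1 \<le> k \<Longrightarrow> bb (2 * k + 1) = 0"
proof -
  assume "1 \<le> k"
  then have "fps_nth BB (2*k+1) = fps_nth CC (2*k+1)" by (simp add: CC_nth)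
  then show ?thesis using CC_odd[of "2*k+1"] by (simp add: bb_BB)
qed

lemma bb_even: "1 \<le> k \<Longrightarrow> bb (2 * k) \<noteq> 0"
proof -
  assume k: "1 \<le> k"
  then have "fps_nth BB (2*k) = fps_nth CC (2*k)" by (simp add: CC_nth)
  moreover have "cc (2*k) \<noteq> 0" using cc_sign[OF k] by auto
  ultimately show ?thesis by (simp add: bb_BB CC_cc)
qed

definition gg :: "nat \<Rightarrow> nat \<Rightarrow> complex" where
  "gg n k = fact n * fps_nth BB k / fact (n + 1 - k)"

lemma tele: "(\<Sum>m<N. EE ^ m) * (EE - 1) = EE ^ N - 1"
  by (induction N) (simp_all add: algebra_simps)

lemma F1: "(EE ^ N - 1) * BB = fps_X * (\<Sum>m<N. EE ^ Suc m)"
proof -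
  have "(EE ^ N - 1) * BB = (\<Sum>m<N. EE ^ m) * (BB * (EE - 1))"
    unfolding tele[symmetric] by (simp add: mult_ac)
  also have "\<dots> = (\<Sum>m<N. EE ^ m) * (fps_X * EE)" by (simp only: BB_eq)
  also have "\<dots> = fps_X * (\<Sum>m<N. EE ^ Suc m)"
    by (simp add: sum_distrib_left sum_distrib_right mult_ac)
  finally show ?thesis .
qed

lemma EE_pow_nth: "fps_nth (EE ^ N) i = of_nat N ^ i / fact i"
  by (simp add: fps_exp_power_mult)

lemma faulhaber:
  "(\<Sum>m<N. (of_nat (Suc m) :: complex) ^ n) = (\<Sum>k\<le>n. gg n k * of_nat N ^ (n + 1 - k))"
proof -
  have "fps_nth ((EE ^ N - 1) * BB) (Suc n) = fps_nth (fps_X * (\<Sum>m<N. EE ^ Suc m)) (Suc n)"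
    by (simp only: F1)
  also have "\<dots> = (\<Sum>m<N. (of_nat (Suc m)) ^ n / fact n)"
    by (simp add: fps_sum_nth EE_pow_nth del: power_Suc)
  finally have e: "(\<Sum>i=0..Suc n. fps_nth (EE ^ N - 1) i * fps_nth BB (Suc n - i)) = (\<Sum>m<N. (of_nat (Suc m)) ^ n / fact n)"
    unfolding fps_mult_nth .
  have "(\<Sum>i=0..Suc n. fps_nth (EE ^ N - 1) i * fps_nth BB (Suc n - i))
      = (\<Sum>i\<in>{1..Suc n}. of_nat N ^ i / fact i * fps_nth BB (Suc n - i))"
  proof -
    have "{0..Suc n} = insert 0 {1..Suc n}" by auto
    then have "(\<Sum>i=0..Suc n. fps_nth (EE ^ N - 1) i * fps_nth BB (Suc n - i))
       = fps_nth (EE ^ N - 1) 0 * fps_nth BB (Suc n) + (\<Sum>i\<in>{1..Suc n}. fps_nth (EE ^ N - 1) i * fps_nth BB (Suc n - i))"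
      by simp
    also have "fps_nth (EE ^ N - 1) 0 = 0" by (simp add: EE_pow_nth)
    also have "(\<Sum>i\<in>{1..Suc n}. fps_nth (EE ^ N - 1) i * fps_nth BB (Suc n - i))
       = (\<Sum>i\<in>{1..Suc n}. of_nat N ^ i / fact i * fps_nth BB (Suc n - i))"
      by (rule sum.cong[OF refl]) (auto simp: EE_pow_nth)
    finally show ?thesis by simp
  qed
  also have "\<dots> = (\<Sum>k\<le>n. of_nat N ^ (n + 1 - k) / fact (n + 1 - k) * fps_nth BB k)"
    by (rule sum.reindex_bij_witness[of _ "\<lambda>k. n + 1 - k" "\<lambda>i. n + 1 - i"]) auto
  finally have e2: "(\<Sum>m<N. (of_nat (Suc m) :: complex) ^ n / fact n)
     = (\<Sum>k\<le>n. of_nat N ^ (n + 1 - k) / fact (n + 1 - k) * fps_nth BB k)" using e by simp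
  have "(\<Sum>m<N. (of_nat (Suc m) :: complex) ^ n) = fact n * (\<Sum>m<N. (of_nat (Suc m) :: complex) ^ n / fact n)"
    by (simp add: sum_distrib_left)
  also have "\<dots> = (\<Sum>k\<le>n. gg n k * of_nat N ^ (n + 1 - k))"
    unfolding e2 sum_distrib_left gg_def by (rule sum.cong[OF refl]) (simp add: field_simps)
  finally show ?thesis .
qed

definition fdz :: "nat \<Rightarrow> complex \<Rightarrow> complex" where
  "fdz n s = (\<Sum>k\<le>n. gg n k * ZZ (s + of_nat k - 1)) - ZZ s"

definition GG :: "nat \<Rightarrow> complex \<Rightarrow> nat \<Rightarrow> nat \<Rightarrow> complex" where
  "GG n s p i = (of_nat (Suc i)) ^ n * of_nat (Suc p) powr (- (s + of_nat n))"

lemma GG_norm: "norm (GG n s p i) = real (Suc i) ^ n * real (Suc p) powr (- (Re s + real n))"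
  unfolding GG_def norm_mult norm_power norm_nat_powr norm_of_nat by simp

lemma GG_abs_summable:
  assumes s: "2 < Re s"
  shows "(\<lambda>x. norm ((\<lambda>(p, i). GG n s p i) x)) summable_on (SIGMA p:UNIV. {..<p})"
proof -
  define \<sigma> where "\<sigma> = Re s"
  have bnd: "(\<Sum>i<p. norm (GG n s p i)) \<le> real (Suc p) powr (- (\<sigma> - 1))" for p
  proof -
    have "(\<Sum>i<p. norm (GG n s p i)) \<le> (\<Sum>i<p. real (Suc p) ^ n * real (Suc p) powr (- (\<sigma> + real n)))"
    proof (rule sum_mono)
      fix i assume "i \<in> {..<p}"
      then have "real (Suc i) ^ n \<le> real (Suc p) ^ n" by (intro power_mono) auto
      then show "norm (GG n s p i) \<le> real (Suc p) ^ n * real (Suc p) powr (- (\<sigma> + real n))"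
        unfolding GG_norm \<sigma>_def by (rule mult_right_mono) simp
    qed
    also have "\<dots> = real p * (real (Suc p) ^ n * real (Suc p) powr (- (\<sigma> + real n)))" by simp
    also have "\<dots> \<le> real (Suc p) * (real (Suc p) ^ n * real (Suc p) powr (- (\<sigma> + real n)))"
      by (rule mult_right_mono) simp_all
    also have "\<dots> = real (Suc p) powr (- (\<sigma> - 1))"
    proof -
      have "real (Suc p) * real (Suc p) ^ n = real (Suc p) powr (real n + 1)"
        by (simp add: powr_add powr_realpow del: of_nat_Suc)
      then have "real (Suc p) * (real (Suc p) ^ n * real (Suc p) powr (- (\<sigma> + real n)))
          = real (Suc p) powr (real n + 1) * real (Suc p) powr (- (\<sigma> + real n))"
        by (simp only: mult.assoc[symmetric])
      also have "\<dots> = real (Suc p) powr (- (\<sigma> - 1))"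
        by (simp only: powr_add[symmetric]) (simp add: algebra_simps)
      finally show ?thesis .
    qed
    finally show ?thesis .
  qed
  have summ: "summable (\<lambda>p. \<Sum>i<p. norm (GG n s p i))"
  proof (rule summable_comparison_test)
    show "\<exists>N. \<forall>p\<ge>N. norm (\<Sum>i<p. norm (GG n s p i)) \<le> real (Suc p) powr (- (\<sigma> - 1))"
      using bnd by (auto intro!: exI[of _ 0] simp: sum_nonneg)
    show "summable (\<lambda>p. real (Suc p) powr (- (\<sigma> - 1)))"
      by (rule summable_zs_real) (use s in \<open>simp add: \<sigma>_def\<close>)
  qed
  show ?thesis
  proof (rule iffD2[OF Infinite_Sum.abs_summable_on_Sigma_iff], intro conjI ballI)
    show "(\<lambda>x. norm ((\<lambda>i. (\<lambda>(p, i). GG n s p i) (p, i)) x)) summable_on {..<p}" for p by simp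
    have "(\<lambda>p. \<Sum>\<^sub>\<infinity>i\<in>{..<p}. norm ((\<lambda>(p, i). GG n s p i) (p, i))) = (\<lambda>p. \<Sum>i<p. norm (GG n s p i))"
      by simp
    moreover have "(\<lambda>p. norm (\<Sum>i<p. norm (GG n s p i))) summable_on UNIV"
      by (subst summable_on_UNIV_nonneg_real_iff) (use summ in \<open>auto simp: sum_nonneg\<close>)
    ultimately show "(\<lambda>x. norm ((\<lambda>p. \<Sum>\<^sub>\<infinity>i\<in>{..<p}. norm ((\<lambda>(p, i). GG n s p i) (p, i))) x)) summable_on UNIV"
      by simp
  qed
qed

lemma GG_bij: "bij_betw (\<lambda>(p, i). (Suc i, p - i)) (SIGMA p:UNIV. {..<p}) ({1::nat..} \<times> {1::nat..})"
  by (rule bij_betwI[where g = "\<lambda>(m, j). (m + j - 1, m - 1)"]) auto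

lemma powr_combine:
  assumes "k \<le> n"
  shows "(of_nat (Suc p) :: complex) powr (- (s + of_nat n)) * of_nat (Suc p) ^ (n + 1 - k)
       = of_nat (Suc p) powr (- (s + of_nat k - 1))"
proof -
  have nz: "(of_nat (Suc p) :: complex) \<noteq> 0" by (rule of_nat_neq_0)
  have "(of_nat (Suc p) :: complex) ^ (n + 1 - k) = of_nat (Suc p) powr of_nat (n + 1 - k)"
    by (rule powr_nat'[symmetric]) (use nz in blast)
  moreover have "(of_nat (n + 1 - k) :: complex) = of_nat n + 1 - of_nat k" using assms by (simp add: of_nat_diff)
  ultimately have "(of_nat (Suc p) :: complex) powr (- (s + of_nat n)) * of_nat (Suc p) ^ (n + 1 - k)
      = of_nat (Suc p) powr (- (s + of_nat n) + (of_nat n + 1 - of_nat k))"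
    by (simp only: powr_add)
  also have "- (s + of_nat n) + (of_nat n + 1 - of_nat k) = - (s + of_nat k - 1)" by simp
  finally show ?thesis .
qed

lemma dz_series_eq:
  assumes s: "2 < Re s"
  shows "dz_series n s = fdz n s"
proof -
  let ?F = "\<lambda>(m, j). (of_nat m :: complex) ^ n * of_nat (m + j) powr (- (s + of_nat n))"
  let ?S = "SIGMA p:UNIV. {..<p}"
  have "dz_series n s = infsum ?F ({1::nat..} \<times> {1::nat..})" unfolding dz_series_def by simp
  also have "\<dots> = infsum (\<lambda>x. ?F ((\<lambda>(p, i). (Suc i, p - i)) x)) ?S"
    by (rule infsum_reindex_bij_betw[OF GG_bij, symmetric])
  also have "\<dots> = infsum (\<lambda>(p, i). GG n s p i) ?S"
    by (rule infsum_cong) (auto simp: GG_def)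
  also have "\<dots> = infsum (\<lambda>p. infsum (GG n s p) {..<p}) UNIV"
    by (rule infsum_Sigma'_banach[symmetric]) (rule abs_summable_summable[OF GG_abs_summable[OF s]])
  finally have dz: "dz_series n s = infsum (\<lambda>p. \<Sum>i<p. GG n s p i) UNIV" by simp
  have hs: "(\<lambda>p. infsum (GG n s p) {..<p}) summable_on UNIV"
    by (rule summable_on_Sigma_banach) (rule abs_summable_summable[OF GG_abs_summable[OF s]])
  then have hs': "(\<lambda>p. \<Sum>i<p. GG n s p i) summable_on UNIV" by simp
  have H: "(\<Sum>i<p. GG n s p i) = (\<Sum>k\<le>n. gg n k * of_nat (Suc p) powr (- (s + of_nat k - 1)))
       - of_nat (Suc p) powr (- s)" for p
  proof -
    have "(\<Sum>i<p. GG n s p i) = of_nat (Suc p) powr (- (s + of_nat n)) * (\<Sum>i<p. (of_nat (Suc i)) ^ n)"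
      unfolding GG_def sum_distrib_left by (simp add: mult_ac)
    also have "(\<Sum>i<p. (of_nat (Suc i) :: complex) ^ n) = (\<Sum>i<Suc p. (of_nat (Suc i)) ^ n) - of_nat (Suc p) ^ n"
      by (simp only: sum.lessThan_Suc add_diff_cancel_right')
    also have "\<dots> = (\<Sum>k\<le>n. gg n k * of_nat (Suc p) ^ (n + 1 - k)) - of_nat (Suc p) ^ n"
      by (simp only: faulhaber)
    also have "of_nat (Suc p) powr (- (s + of_nat n)) * ((\<Sum>k\<le>n. gg n k * of_nat (Suc p) ^ (n + 1 - k)) - of_nat (Suc p) ^ n)
       = (\<Sum>k\<le>n. gg n k * (of_nat (Suc p) powr (- (s + of_nat n)) * of_nat (Suc p) ^ (n + 1 - k)))
         - of_nat (Suc p) powr (- (s + of_nat n)) * of_nat (Suc p) ^ n"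
      by (simp add: right_diff_distrib sum_distrib_left mult_ac)
    also have "\<dots> = (\<Sum>k\<le>n. gg n k * of_nat (Suc p) powr (- (s + of_nat k - 1))) - of_nat (Suc p) powr (- s)"
    proof -
      have "(\<Sum>k\<le>n. gg n k * (of_nat (Suc p) powr (- (s + of_nat n)) * of_nat (Suc p) ^ (n + 1 - k)))
          = (\<Sum>k\<le>n. gg n k * of_nat (Suc p) powr (- (s + of_nat k - 1)))"
        by (rule sum.cong[OF refl]) (simp only: powr_combine atMost_iff)
      moreover have "(of_nat (Suc p) :: complex) powr (- (s + of_nat n)) * of_nat (Suc p) ^ n = of_nat (Suc p) powr (- s)"
      proof -
        have nz: "(of_nat (Suc p) :: complex) \<noteq> 0" by (rule of_nat_neq_0)
        have "(of_nat (Suc p) :: complex) ^ n = of_nat (Suc p) powr of_nat n"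
          by (rule powr_nat'[symmetric]) (use nz in blast)
        then have "(of_nat (Suc p) :: complex) powr (- (s + of_nat n)) * of_nat (Suc p) ^ n
            = of_nat (Suc p) powr (- (s + of_nat n) + of_nat n)" by (simp only: powr_add)
        then show ?thesis by simp
      qed
      ultimately show ?thesis by simp
    qed
    finally show ?thesis .
  qed
  have sk: "(\<lambda>p. (of_nat (Suc p) :: complex) powr (- (s + of_nat k - 1))) sums zs (s + of_nat k - 1)" for k
    by (rule sums_zs) (use s in simp)
  have s0: "(\<lambda>p. (of_nat (Suc p) :: complex) powr (- s)) sums zs s" by (rule sums_zs) (use s in simp)
  have sums: "(\<lambda>p. \<Sum>i<p. GG n s p i) sums ((\<Sum>k\<le>n. gg n k * zs (s + of_nat k - 1)) - zs s)"
    unfolding H by (intro sums_diff sums_sum sums_mult sk s0)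
  have "infsum (\<lambda>p. \<Sum>i<p. GG n s p i) UNIV = (\<Sum>k\<le>n. gg n k * zs (s + of_nat k - 1)) - zs s"
    using has_sum_imp_sums[OF has_sum_infsum[OF hs']] sums sums_unique2 by blast
  also have "\<dots> = fdz n s"
  proof -
    have "zs (s + of_nat k - 1) = ZZ (s + of_nat k - 1)" for k by (rule ZZ_eq[symmetric]) (use s in simp)
    moreover have "zs s = ZZ s" by (rule ZZ_eq[symmetric]) (use s in simp)
    ultimately show ?thesis unfolding fdz_def by simp
  qed
  finally show ?thesis using dz by simp
qed

lemma hol_isCont: "f holomorphic_on S \<Longrightarrow> open S \<Longrightarrow> x \<in> S \<Longrightarrow> isCont f x"
  using continuous_on_eq_continuous_at holomorphic_on_imp_continuous_on by blast

lemma ZZs_holo: "(\<lambda>w. ZZ (w + c)) holomorphic_on (UNIV - {1 - c})"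
proof -
  have "(ZZ \<circ> (\<lambda>w. w + c)) holomorphic_on (UNIV - {1 - c})"
    by (rule holomorphic_on_compose_gen[OF _ ZZ_holo]) (auto intro!: holomorphic_intros simp: eq_diff_eq)
  then show ?thesis by (simp add: o_def)
qed

lemma HHs_holo: "(\<lambda>w. HH (w + c)) holomorphic_on UNIV"
proof -
  have "(HH \<circ> (\<lambda>w. w + c)) holomorphic_on UNIV"
    by (rule holomorphic_on_compose_gen[OF _ HH_holo]) (auto intro!: holomorphic_intros)
  then show ?thesis by (simp add: o_def)
qed

lemma ZZ_shift_lim:
  "((\<lambda>w. ZZ (w + (of_nat k - 1)) * (w - p)) \<longlongrightarrow> (if p = 2 - of_nat k then 1 else 0)) (at p)"
proof (cases "p = 2 - of_nat k")
  case True
  have ev: "eventually (\<lambda>w. HH (w + (of_nat k - 1)) = ZZ (w + (of_nat k - 1)) * (w - p)) (at p)"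
    unfolding eventually_at_filter
  proof (rule always_eventually, intro allI impI)
    fix w assume wp: "w \<noteq> p"
    have d: "w + (of_nat k - 1) - 1 = w - p" using True by simp
    have "ZZ (w + (of_nat k - 1)) * (w - p) = HH (w + (of_nat k - 1)) / (w - p) * (w - p)"
      by (simp only: ZZ_def d)
    also have "\<dots> = HH (w + (of_nat k - 1))" using wp by simp
    finally show "HH (w + (of_nat k - 1)) = ZZ (w + (of_nat k - 1)) * (w - p)" by simp
  qed
  have c: "isCont (\<lambda>w. HH (w + (of_nat k - 1))) p" by (rule hol_isCont[OF HHs_holo]) auto
  have e: "p + (of_nat k - 1) = 1" using True by simp
  have "HH (p + (of_nat k - 1)) = 1" by (simp only: e HH_one)
  then have "((\<lambda>w. HH (w + (of_nat k - 1))) \<longlongrightarrow> 1) (at p)" using isContD[OF c] by simp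
  then show ?thesis using True Lim_transform_eventually[OF _ ev] by simp
next
  case False
  have h: "(\<lambda>w. ZZ (w + (of_nat k - 1)) * (w - p)) holomorphic_on (UNIV - {1 - (of_nat k - 1)})"
    by (intro holomorphic_intros ZZs_holo)
  have "p \<in> UNIV - {1 - (of_nat k - 1)}" using False by (auto simp: algebra_simps)
  then have "isCont (\<lambda>w. ZZ (w + (of_nat k - 1)) * (w - p)) p"
    by (rule hol_isCont[OF h open_Diff[OF open_UNIV closed_singleton]])
  then show ?thesis using False isContD by fastforce
qed

lemma fdz_alt: "fdz n w * (w - p) =
   (\<Sum>k\<le>n. gg n k * (ZZ (w + (of_nat k - 1)) * (w - p))) - ZZ (w + (of_nat 1 - 1)) * (w - p)"
proof -
  have "fdz n w * (w - p) = (\<Sum>k\<le>n. gg n k * ZZ (w + of_nat k - 1)) * (w - p) - ZZ w * (w - p)"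
    by (simp only: fdz_def left_diff_distrib)
  also have "(\<Sum>k\<le>n. gg n k * ZZ (w + of_nat k - 1)) * (w - p) = (\<Sum>k\<le>n. gg n k * (ZZ (w + (of_nat k - 1)) * (w - p)))"
    by (subst sum_distrib_right, rule sum.cong[OF refl]) (simp add: add_diff_eq mult.assoc)
  also have "ZZ w = ZZ (w + (of_nat 1 - 1))" by simp
  finally show ?thesis .
qed

lemma fdz_lim:
  "((\<lambda>w. fdz n w * (w - p)) \<longlongrightarrow>
     (\<Sum>k\<le>n. (if p = 2 - of_nat k then gg n k else 0)) - (if p = 1 then 1 else 0)) (at p)"
proof -
  have "((\<lambda>w. (\<Sum>k\<le>n. gg n k * (ZZ (w + (of_nat k - 1)) * (w - p))) - ZZ (w + (of_nat 1 - 1)) * (w - p))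
     \<longlongrightarrow> (\<Sum>k\<le>n. gg n k * (if p = 2 - of_nat k then 1 else 0)) - (if p = 2 - of_nat 1 then 1 else 0)) (at p)"
    by (intro tendsto_diff tendsto_sum tendsto_mult_left ZZ_shift_lim)
  moreover have "(\<Sum>k\<le>n. gg n k * (if p = 2 - of_nat k then 1 else 0)) = (\<Sum>k\<le>n. (if p = 2 - of_nat k then gg n k else 0))"
    by (rule sum.cong) auto
  moreover have "(if p = 2 - of_nat 1 then 1 else 0) = (if p = 1 then (1::complex) else 0)" by simp
  ultimately show ?thesis unfolding fdz_alt by simp
qed

lemma pole_res:
  assumes hol: "f holomorphic_on (UNIV - P)" and fin: "finite P" and p: "p \<in> P"
    and lim: "((\<lambda>w. f w * (w - p)) \<longlongrightarrow> c) (at p)" and c: "c \<noteq> 0"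
  shows "is_pole f p \<and> residue f p = c"
proof
  define S where "S = UNIV - (P - {p})"
  have oS: "open S" unfolding S_def using fin by (intro open_Diff open_UNIV finite_imp_closed) auto
  have pS: "p \<in> S" unfolding S_def by simp
  have hS: "f holomorphic_on (S - {p})"
  proof -
    have "S - {p} = UNIV - P" unfolding S_def using p by auto
    then show ?thesis using hol by simp
  qed
  show "residue f p = c" by (rule residue_simple'[OF oS pS hS lim])
  define G where "G = (\<lambda>w. if w = p then c else f w * (w - p))"
  have ev: "eventually (\<lambda>w. f w * (w - p) = G w) (at p)"
    unfolding eventually_at_filter G_def by simp
  have "(G \<longlongrightarrow> G p) (at p)" using Lim_transform_eventually[OF lim ev] by (simp add: G_def)
  then have cG: "isCont G p" by (simp add: isCont_def)
  have "filterlim (\<lambda>w. w - p) (nhds 0) (at p)" by (intro tendsto_eq_intros) auto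
  then have fl: "filterlim (\<lambda>w. w - p) (at 0) (at p)"
    by (rule filterlim_atI) (auto simp: eventually_at_filter)
  have "is_pole (\<lambda>w. G w / (w - p)) p" by (rule is_pole_divide[OF cG fl]) (simp add: G_def c)
  moreover have ev2: "eventually (\<lambda>w. G w / (w - p) = f w) (at p)"
    unfolding eventually_at_filter G_def by simp
  ultimately show "is_pole f p" using is_pole_cong[OF ev2 refl] by simp
qed

lemma cond_iff: "(c = 2 - (of_nat k :: complex)) \<longleftrightarrow> (of_nat k = 2 - c)"
  by auto

lemma sum_pick:
  assumes "\<And>k. (c = 2 - (of_nat k :: complex)) \<longleftrightarrow> k = K"
  shows "(\<Sum>k\<le>n. (if c = 2 - of_nat k then gg n k else 0)) = (if K \<le> n then gg n K else 0)"
  using assms by (simp add: sum.delta')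

lemma gg0: "gg n 0 = 1 / (of_nat n + 1)"
  unfolding gg_def by (simp add: BB_nth bb0 fact_Suc)

lemma bb1': "bb (Suc 0) = 1/2" using bb1 by simp

lemma gg1: "1 \<le> n \<Longrightarrow> gg n 1 = 1/2"
  unfolding gg_def by (simp add: BB_nth bb1')

lemma BB_nz: "fps_nth BB k = 0 \<longleftrightarrow> bb k = 0" by (simp add: BB_nth)

lemma gg_nz: "k \<le> n \<Longrightarrow> gg n k = 0 \<longleftrightarrow> bb k = 0"
  unfolding gg_def by (simp add: BB_nth)

lemma zeta0: "riemann_zeta 0 = - 1 / 2"
proof -
  have "riemann_zeta 0 = ZZ 0" by (rule riemann_zeta_eq) simp
  also have "\<dots> = - bb 1" unfolding ZZ_def bb_def by simp
  finally show ?thesis using bb1 by simp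
qed

lemma zeta_odd: "riemann_zeta (- 2 * of_nat j - 1) = - (bb (2 * j + 2) / of_nat (2 * j + 2))"
proof -
  have "riemann_zeta (- 2 * of_nat j - 1) = ZZ (- 2 * of_nat j - 1)"
    by (rule riemann_zeta_eq) (auto simp: complex_eq_iff)
  also have "\<dots> = HH (- 2 * of_nat j - 1) / (- 2 * of_nat j - 2)"
    unfolding ZZ_def by simp
  also have "HH (- 2 * of_nat j - 1) = bb (2 * j + 2)"
  proof -
    have e: "(- 2 * of_nat j - 1 :: complex) = 1 - of_nat (2*j+2)" by simp
    show ?thesis unfolding bb_def e by (rule refl)
  qed
  also have "(- 2 * of_nat j - 2 :: complex) = - of_nat (2 * j + 2)" by simp
  finally show ?thesis by (simp only: divide_minus_right)
qed

lemma gchoose_neg: "j < n div 2 \<Longrightarrow>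
  (of_int (2 * int j - int n) gchoose (2 * j + 1) :: complex) = - of_nat (n choose (2 * j + 1))"
proof -
  have "(of_int (2 * int j - int n) gchoose (2 * j + 1) :: complex)
      = (-1) ^ (2 * j + 1) * ((of_nat (2 * j + 1) - of_int (2 * int j - int n) - 1) gchoose (2 * j + 1))"
    by (rule gbinomial_negated_upper)
  also have "(of_nat (2 * j + 1) - of_int (2 * int j - int n) - 1 :: complex) = of_nat n" by simp
  finally show ?thesis by (simp add: binomial_gbinomial)
qed

lemma gg_even:
  assumes j: "j < n div 2"
  shows "gg n (2 * j + 2) = (of_int (2 * int j - int n) gchoose (2 * j + 1)) * riemann_zeta (- 2 * of_nat j - 1)"
proof -
  have jn: "2 * j + 1 \<le> n" using j by linarith
  have "(of_int (2 * int j - int n) gchoose (2 * j + 1)) * riemann_zeta (- 2 * of_nat j - 1)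
      = of_nat (n choose (2 * j + 1)) * bb (2 * j + 2) / of_nat (2 * j + 2)"
    unfolding gchoose_neg[OF j] zeta_odd by simp
  also have "\<dots> = fact n / (fact (2 * j + 1) * fact (n - (2 * j + 1))) * bb (2 * j + 2) / of_nat (2 * j + 2)"
    by (simp only: binomial_fact[OF jn])
  also have "\<dots> = gg n (2 * j + 2)"
  proof -
    have e1: "2 * j + 2 = Suc (2 * j + 1)" by simp
    have "(fact (2 * j + 2) :: complex) = fact (Suc (2 * j + 1))" by (simp only: e1)
    also have "\<dots> = of_nat (Suc (2*j+1)) * fact (2*j+1)" by (rule fact_Suc)
    also have "of_nat (Suc (2*j+1)) = (of_nat (2*j+2) :: complex)" by (simp only: e1)
    finally have f: "(fact (2 * j + 2) :: complex) = of_nat (2 * j + 2) * fact (2 * j + 1)" .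
    have e: "n + 1 - (2 * j + 2) = n - (2 * j + 1)" by simp
    show ?thesis unfolding gg_def BB_nth e f
      by (simp add: field_simps del: of_nat_Suc of_nat_add of_nat_mult)
  qed
  finally show ?thesis by simp
qed

lemma fdz_holo:
  assumes h: "\<And>k. k \<le> n \<Longrightarrow> gg n k \<noteq> 0 \<Longrightarrow> 2 - of_nat k \<in> P" and one: "1 \<in> P"
  shows "fdz n holomorphic_on (UNIV - P)"
proof -
  have T: "(\<lambda>s. gg n k * ZZ (s + of_nat k - 1)) holomorphic_on (UNIV - P)" if k: "k \<in> {..n}" for k
  proof (cases "gg n k = 0")
    case True then show ?thesis by simp
  next
    case False
    then have "2 - of_nat k \<in> P" using h k by simp
    then have sub: "UNIV - P \<subseteq> UNIV - {1 - (of_nat k - 1)}" by (auto simp: algebra_simps)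
    have "(\<lambda>s. ZZ (s + (of_nat k - 1))) holomorphic_on (UNIV - P)"
      by (rule holomorphic_on_subset[OF ZZs_holo sub])
    then have "(\<lambda>s. ZZ (s + of_nat k - 1)) holomorphic_on (UNIV - P)" by (simp add: add_diff_eq)
    then show ?thesis by (intro holomorphic_intros)
  qed
  have Z: "ZZ holomorphic_on (UNIV - P)" by (rule holomorphic_on_subset[OF ZZ_holo]) (use one in auto)
  have "(\<lambda>s. (\<Sum>k\<le>n. gg n k * ZZ (s + of_nat k - 1)) - ZZ s) holomorphic_on (UNIV - P)"
    by (intro holomorphic_on_diff holomorphic_on_sum T Z)
  then show ?thesis unfolding fdz_def[abs_def] .
qed

lemma res_at:
  assumes hol: "fdz n holomorphic_on (UNIV - P)" and fin: "finite P" and p: "p \<in> P"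
    and K: "\<And>k. (p = 2 - (of_nat k :: complex)) \<longleftrightarrow> k = K"
    and c: "c = (if K \<le> n then gg n K else 0) - (if p = 1 then 1 else 0)" and c0: "c \<noteq> 0"
  shows "is_pole (fdz n) p \<and> residue (fdz n) p = c"
proof (rule pole_res[OF hol fin p _ c0])
  show "((\<lambda>w. fdz n w * (w - p)) \<longlongrightarrow> c) (at p)"
    using fdz_lim[of n p] unfolding sum_pick[OF K] c .
qed

lemma gg1': "1 \<le> n \<Longrightarrow> gg n (Suc 0) = 1/2" using gg1 by simp

lemma K2: "((2::complex) = 2 - of_nat k) \<longleftrightarrow> k = 0" by auto
lemma K1: "((1::complex) = 2 - of_nat k) \<longleftrightarrow> k = 1"
proof -
  have "((1::complex) = 2 - of_nat k) \<longleftrightarrow> (of_nat k = (of_nat 1 :: complex))" by (auto simp: algebra_simps)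
  then show ?thesis by (simp only: of_nat_eq_iff)
qed
lemma Kj: "((- 2 * of_nat j :: complex) = 2 - of_nat k) \<longleftrightarrow> k = 2 * j + 2"
proof -
  have "((- 2 * of_nat j :: complex) = 2 - of_nat k) \<longleftrightarrow> (of_nat k = (of_nat (2 * j + 2) :: complex))"
    by (auto simp: algebra_simps)
  then show ?thesis by (simp only: of_nat_eq_iff)
qed

lemma gg_support:
  assumes k: "k \<le> n" and nz: "gg n k \<noteq> 0" and k2: "2 \<le> k"
  shows "\<exists>j. j < n div 2 \<and> k = 2 * j + 2"
proof -
  have bk: "bb k \<noteq> 0" using gg_nz[OF k] nz by simp
  have "even k"
  proof (rule ccontr)
    assume "odd k"
    then obtain m where m: "k = 2 * m + 1" by (auto elim: oddE)
    then have "1 \<le> m" using k2 by simp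
    then have "bb k = 0" using bb_odd m by simp
    with bk show False by simp
  qed
  then obtain m where m: "k = 2 * m" by (auto elim: evenE)
  define j where "j = m - 1"
  have "k = 2 * j + 2" using m k2 unfolding j_def by simp
  moreover have "j < n div 2" using k m k2 unfolding j_def by linarith
  ultimately show ?thesis by blast
qed

theorem theorem4p1:
  shows
  "(\<exists>f. f holomorphic_on (UNIV - {2, 1}) \<and>
        (\<forall>s. 2 < Re s \<longrightarrow> f s = dz_series 0 s) \<and>
        is_pole f 2 \<and> residue f 2 = 1 \<and>
        is_pole f 1 \<and> residue f 1 = 2 * riemann_zeta 0)
 \<and> (\<exists>f. f holomorphic_on (UNIV - {2, 1}) \<and>
        (\<forall>s. 2 < Re s \<longrightarrow> f s = dz_series 1 s) \<and>
        is_pole f 2 \<and> residue f 2 = 1 / 2 \<and>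
        is_pole f 1 \<and> residue f 1 = riemann_zeta 0)
 \<and> (\<forall>n::nat. 2 \<le> n \<longrightarrow>
      (\<exists>f. f holomorphic_on
              (UNIV - ({2, 1} \<union> {- 2 * of_nat k | k. k < n div 2})) \<and>
        (\<forall>s. 2 < Re s \<longrightarrow> f s = dz_series n s) \<and>
        is_pole f 2 \<and> residue f 2 = 1 / (of_nat n + 1) \<and>
        is_pole f 1 \<and> residue f 1 = riemann_zeta 0 \<and> riemann_zeta 0 = - 1 / 2 \<and>
        (\<forall>k::nat. k < n div 2 \<longrightarrow>
           is_pole f (- 2 * of_nat k) \<and>
           residue f (- 2 * of_nat k) =
             (of_int (2 * int k - int n) gchoose (2 * k + 1)) *
             riemann_zeta (- 2 * of_nat k - 1))))"
proof (intro conjI allI impI)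
  have fin0: "finite {2, 1::complex}" by simp
  show "\<exists>f. f holomorphic_on (UNIV - {2, 1}) \<and>
        (\<forall>s. 2 < Re s \<longrightarrow> f s = dz_series 0 s) \<and>
        is_pole f 2 \<and> residue f 2 = 1 \<and>
        is_pole f 1 \<and> residue f 1 = 2 * riemann_zeta 0"
  proof (rule exI[of _ "fdz 0"], intro conjI allI impI)
    show hol: "fdz 0 holomorphic_on (UNIV - {2, 1})" by (rule fdz_holo) auto
    show "2 < Re s \<Longrightarrow> fdz 0 s = dz_series 0 s" for s by (rule dz_series_eq[symmetric])
    have r2: "is_pole (fdz 0) 2 \<and> residue (fdz 0) 2 = 1"
      by (rule res_at[OF hol fin0 _ K2]) (simp_all add: gg0)
    show "is_pole (fdz 0) 2" using r2 by simp
    show "residue (fdz 0) 2 = 1" using r2 by simp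
    have r1: "is_pole (fdz 0) 1 \<and> residue (fdz 0) 1 = -1"
      by (rule res_at[OF hol fin0 _ K1]) simp_all
    show "is_pole (fdz 0) 1" using r1 by simp
    show "residue (fdz 0) 1 = 2 * riemann_zeta 0" using r1 zeta0 by simp
  qed
  show "\<exists>f. f holomorphic_on (UNIV - {2, 1}) \<and>
        (\<forall>s. 2 < Re s \<longrightarrow> f s = dz_series 1 s) \<and>
        is_pole f 2 \<and> residue f 2 = 1 / 2 \<and>
        is_pole f 1 \<and> residue f 1 = riemann_zeta 0"
  proof (rule exI[of _ "fdz 1"], intro conjI allI impI)
    show hol: "fdz 1 holomorphic_on (UNIV - {2, 1})"
    proof (rule fdz_holo)
      fix k assume "k \<le> (1::nat)"
      then have "k = 0 \<or> k = 1" by auto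
      then show "2 - of_nat k \<in> {2, 1::complex}" by auto
    qed auto
    show "2 < Re s \<Longrightarrow> fdz 1 s = dz_series 1 s" for s by (rule dz_series_eq[symmetric])
    have r2: "is_pole (fdz 1) 2 \<and> residue (fdz 1) 2 = 1/2"
      by (rule res_at[OF hol fin0 _ K2]) (simp_all add: gg0)
    show "is_pole (fdz 1) 2" using r2 by simp
    show "residue (fdz 1) 2 = 1/2" using r2 by simp
    have r1: "is_pole (fdz 1) 1 \<and> residue (fdz 1) 1 = - 1/2"
      by (rule res_at[OF hol fin0 _ K1]) (simp_all add: gg1 gg1')
    show "is_pole (fdz 1) 1" using r1 by simp
    show "residue (fdz 1) 1 = riemann_zeta 0" using r1 zeta0 by simp
  qed
  fix n :: nat
  assume n2: "2 \<le> n"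
  define P where "P = ({2, 1} \<union> {- 2 * of_nat k | k. k < n div 2} :: complex set)"
  have finP: "finite P"
  proof -
    have "{- 2 * of_nat k | k. k < n div 2} = (\<lambda>k. - 2 * of_nat k :: complex) ` {..<n div 2}" by auto
    then show ?thesis unfolding P_def by simp
  qed
  have hol: "fdz n holomorphic_on (UNIV - P)"
  proof (rule fdz_holo)
    fix k assume k: "k \<le> n" and nz: "gg n k \<noteq> 0"
    show "2 - of_nat k \<in> P"
    proof (cases "2 \<le> k")
      case True
      then obtain j where j: "j < n div 2" "k = 2 * j + 2" using gg_support[OF k nz] by blast
      then have "2 - of_nat k = (- 2 * of_nat j :: complex)" by simp
      then show ?thesis unfolding P_def using j by blast
    next
      case False
      then have "k = 0 \<or> k = 1" by auto
      then show ?thesis unfolding P_def by auto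
    qed
  qed (simp add: P_def)
  show "\<exists>f. f holomorphic_on
              (UNIV - ({2, 1} \<union> {- 2 * of_nat k | k. k < n div 2})) \<and>
        (\<forall>s. 2 < Re s \<longrightarrow> f s = dz_series n s) \<and>
        is_pole f 2 \<and> residue f 2 = 1 / (of_nat n + 1) \<and>
        is_pole f 1 \<and> residue f 1 = riemann_zeta 0 \<and> riemann_zeta 0 = - 1 / 2 \<and>
        (\<forall>k::nat. k < n div 2 \<longrightarrow>
           is_pole f (- 2 * of_nat k) \<and>
           residue f (- 2 * of_nat k) =
             (of_int (2 * int k - int n) gchoose (2 * k + 1)) *
             riemann_zeta (- 2 * of_nat k - 1))"
  proof (rule exI[of _ "fdz n"], intro conjI allI impI)
    show "fdz n holomorphic_on (UNIV - ({2, 1} \<union> {- 2 * of_nat k | k. k < n div 2}))"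
      using hol unfolding P_def .
    show "2 < Re s \<Longrightarrow> fdz n s = dz_series n s" for s by (rule dz_series_eq[symmetric])
    have p2: "2 \<in> P" unfolding P_def by simp
    have r2: "is_pole (fdz n) 2 \<and> residue (fdz n) 2 = 1 / (of_nat n + 1)"
      by (rule res_at[OF hol finP p2 K2]) (simp_all add: gg0)
    show "is_pole (fdz n) 2" using r2 by simp
    show "residue (fdz n) 2 = 1 / (of_nat n + 1)" using r2 by simp
    have p1: "1 \<in> P" unfolding P_def by simp
    have r1: "is_pole (fdz n) 1 \<and> residue (fdz n) 1 = - 1/2"
      by (rule res_at[OF hol finP p1 K1]) (use n2 in \<open>simp_all add: gg1 gg1'\<close>)
    show "is_pole (fdz n) 1" using r1 by simp
    show "residue (fdz n) 1 = riemann_zeta 0" using r1 zeta0 by simp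
    show "riemann_zeta 0 = - 1 / 2" by (rule zeta0)
    fix j :: nat assume j: "j < n div 2"
    have pj: "- 2 * of_nat j \<in> P" unfolding P_def using j by blast
    have jn: "2 * j + 2 \<le> n" using j by linarith
    have nz: "gg n (2 * j + 2) \<noteq> 0"
    proof -
      have "bb (2 * (j + 1)) \<noteq> 0" by (rule bb_even) simp
      then have "bb (2 * j + 2) \<noteq> 0" by simp
      then show ?thesis using gg_nz[OF jn] by simp
    qed
    have ne1: "(- 2 * of_nat j :: complex) \<noteq> 1"
    proof
      assume "(- 2 * of_nat j :: complex) = 1"
      then have "Re (- 2 * of_nat j :: complex) = Re 1" by simp
      then show False by simp
    qed
    have rj: "is_pole (fdz n) (- 2 * of_nat j) \<and> residue (fdz n) (- 2 * of_nat j) = gg n (2 * j + 2)"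
      by (rule res_at[OF hol finP pj Kj]) (use jn ne1 nz in simp_all)
    show "is_pole (fdz n) (- 2 * of_nat j)" using rj by simp
    show "residue (fdz n) (- 2 * of_nat j) =
             (of_int (2 * int j - int n) gchoose (2 * j + 1)) * riemann_zeta (- 2 * of_nat j - 1)"
      using rj gg_even[OF j] by simp
  qed
qed

end
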